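(* The single-machine scheduling problem $1|\text{two chains}|\sum w_jC_j$ can be solved in $O(n)$ time, where $n$ is the number of jobs.
   Context: The problem $1|\text{two chains}|\sum w_jC_j$ is defined as follows. There are $n$ jobs, and job $j$ has processing time $p_j>0$ and weight $w_j\ge 0$. The jobs are partitioned into two chains (linear orders), and within each chain the jobs must be processed in the chain order. A single machine processes one job at a time, without preemption, starting at time $0$. $C_j$ denotes the completion time of job $j$. The goal is to find a feasible sequence of jobs minimizing $\sum_j w_jC_j$. *)

theory Defs
  imports Main "HOL.Real"
begin

text \<open>An instance is given by two chains, each a list of jobs (p_j, w_j) in chain order.
  Jobs are identified as Inl i (i-th job of chain 1) and Inr j (j-th job of chain 2).\<close>

type_synonym job_data = "real \<times> real"   (* (processing time, weight) *)

definition valid_instance :: "job_data list \<Rightarrow> job_data list \<Rightarrow> bool" where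
  "valid_instance c1 c2 \<longleftrightarrow> (\<forall>(p, w) \<in> set (c1 @ c2). p > 0 \<and> w \<ge> 0)"

fun ptime :: "job_data list \<Rightarrow> job_data list \<Rightarrow> nat + nat \<Rightarrow> real" where
  "ptime c1 c2 (Inl i) = fst (c1 ! i)"
| "ptime c1 c2 (Inr j) = fst (c2 ! j)"

fun weight :: "job_data list \<Rightarrow> job_data list \<Rightarrow> nat + nat \<Rightarrow> real" where
  "weight c1 c2 (Inl i) = snd (c1 ! i)"
| "weight c1 c2 (Inr j) = snd (c2 ! j)"

text \<open>Feasible sequences: all orders of the n jobs respecting both chain orders,
  i.e. the interleavings of the two chains.\<close>
definition feasible_seqs :: "job_data list \<Rightarrow> job_data list \<Rightarrow> (nat + nat) list set" where
  "feasible_seqs c1 c2 = shuffles (map Inl [0..<length c1]) (map Inr [0..<length c2])"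

text \<open>Completion time of the k-th job of the sequence (no idle time, start at 0) and the
  objective sum_j w_j C_j.\<close>
definition completion :: "job_data list \<Rightarrow> job_data list \<Rightarrow> (nat + nat) list \<Rightarrow> nat \<Rightarrow> real" where
  "completion c1 c2 \<sigma> k = (\<Sum>l\<le>k. ptime c1 c2 (\<sigma> ! l))"

definition twct :: "job_data list \<Rightarrow> job_data list \<Rightarrow> (nat + nat) list \<Rightarrow> real" where
  "twct c1 c2 \<sigma> = (\<Sum>k<length \<sigma>. weight c1 c2 (\<sigma> ! k) * completion c1 c2 \<sigma> k)"

definition optimal_seq :: "job_data list \<Rightarrow> job_data list \<Rightarrow> (nat + nat) list \<Rightarrow> bool" where
  "optimal_seq c1 c2 \<sigma> \<longleftrightarrow> \<sigma> \<in> feasible_seqs c1 c2 \<and>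
     (\<forall>\<tau> \<in> feasible_seqs c1 c2. twct c1 c2 \<sigma> \<le> twct c1 c2 \<tau>)"

text \<open>Integer registers/memory (indices, with +,-, comparisons) and real registers/memory
  (with +,-,*,/, comparisons), indirect addressing, no conversion from reals to integers
  (no floor). Each executed instruction costs one time unit.\<close>

datatype instr =
    IConst nat int
  | IAdd nat nat nat
  | ISub nat nat nat
  | ILoad nat nat
  | IStore nat nat
  | RConst nat int
  | RAdd nat nat nat
  | RSub nat nat nat
  | RMul nat nat nat
  | RDiv nat nat nat
  | RLoad nat nat
  | RStore nat nat
  | JmpILe nat nat nat
  | JmpRLe nat nat nat
  | Jmp nat
  | Halt

record state =
  pc :: nat
  ireg :: "nat \<Rightarrow> int"
  rreg :: "nat \<Rightarrow> real"
  imem :: "int \<Rightarrow> int"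
  rmem :: "int \<Rightarrow> real"

definition halted :: "instr list \<Rightarrow> state \<Rightarrow> bool" where
  "halted P s \<longleftrightarrow> pc s \<ge> length P \<or> P ! pc s = Halt"

fun exec :: "instr \<Rightarrow> state \<Rightarrow> state" where
  "exec (IConst a c) s = s\<lparr>ireg := (ireg s)(a := c), pc := Suc (pc s)\<rparr>"
| "exec (IAdd a b c) s = s\<lparr>ireg := (ireg s)(a := ireg s b + ireg s c), pc := Suc (pc s)\<rparr>"
| "exec (ISub a b c) s = s\<lparr>ireg := (ireg s)(a := ireg s b - ireg s c), pc := Suc (pc s)\<rparr>"
| "exec (ILoad a b) s = s\<lparr>ireg := (ireg s)(a := imem s (ireg s b)), pc := Suc (pc s)\<rparr>"
| "exec (IStore a b) s = s\<lparr>imem := (imem s)(ireg s b := ireg s a), pc := Suc (pc s)\<rparr>"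
| "exec (RConst a c) s = s\<lparr>rreg := (rreg s)(a := of_int c), pc := Suc (pc s)\<rparr>"
| "exec (RAdd a b c) s = s\<lparr>rreg := (rreg s)(a := rreg s b + rreg s c), pc := Suc (pc s)\<rparr>"
| "exec (RSub a b c) s = s\<lparr>rreg := (rreg s)(a := rreg s b - rreg s c), pc := Suc (pc s)\<rparr>"
| "exec (RMul a b c) s = s\<lparr>rreg := (rreg s)(a := rreg s b * rreg s c), pc := Suc (pc s)\<rparr>"
| "exec (RDiv a b c) s = s\<lparr>rreg := (rreg s)(a := rreg s b / rreg s c), pc := Suc (pc s)\<rparr>"
| "exec (RLoad a b) s = s\<lparr>rreg := (rreg s)(a := rmem s (ireg s b)), pc := Suc (pc s)\<rparr>"
| "exec (RStore a b) s = s\<lparr>rmem := (rmem s)(ireg s b := rreg s a), pc := Suc (pc s)\<rparr>"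
| "exec (JmpILe a b l) s = s\<lparr>pc := (if ireg s a \<le> ireg s b then l else Suc (pc s))\<rparr>"
| "exec (JmpRLe a b l) s = s\<lparr>pc := (if rreg s a \<le> rreg s b then l else Suc (pc s))\<rparr>"
| "exec (Jmp l) s = s\<lparr>pc := l\<rparr>"
| "exec Halt s = s"

definition step :: "instr list \<Rightarrow> state \<Rightarrow> state" where
  "step P s = (if halted P s then s else exec (P ! pc s) s)"

definition run :: "instr list \<Rightarrow> nat \<Rightarrow> state \<Rightarrow> state" where
  "run P t s = (step P ^^ t) s"

text \<open>Input encoding: imem[0] = length of chain 1 (a), imem[1] = length of chain 2 (b);
  job i of chain 1 has p at rmem[2i], w at rmem[2i+1]; job j of chain 2 has
  p at rmem[2(a+j)], w at rmem[2(a+j)+1].\<close>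
definition init_state :: "job_data list \<Rightarrow> job_data list \<Rightarrow> state" where
  "init_state c1 c2 =
    \<lparr> pc = 0, ireg = (\<lambda>_. 0), rreg = (\<lambda>_. 0),
      imem = (\<lambda>x. if x = 0 then int (length c1) else if x = 1 then int (length c2) else 0),
      rmem = (\<lambda>x. if 0 \<le> x \<and> nat x < 2 * length (c1 @ c2)
                  then (if even (nat x) then fst ((c1 @ c2) ! (nat x div 2))
                        else snd ((c1 @ c2) ! (nat x div 2)))
                  else 0) \<rparr>"

text \<open>Output encoding: the k-th job of the computed sequence (k < n) is described by
  imem[2+2k] (0 = chain 1, anything else = chain 2) and imem[3+2k] (index within chain).\<close>
definition output_seq :: "nat \<Rightarrow> state \<Rightarrow> (nat + nat) list" where
  "output_seq n s = map (\<lambda>k. if imem s (2 + 2 * int k) = 0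
                              then Inl (nat (imem s (3 + 2 * int k)))
                              else Inr (nat (imem s (3 + 2 * int k)))) [0..<n]"

definition solves_in_linear_time :: "instr list \<Rightarrow> bool" where
  "solves_in_linear_time P \<longleftrightarrow> (\<exists>c::nat. \<forall>c1 c2. valid_instance c1 c2 \<longrightarrow>
     (let n = length c1 + length c2 in
      \<exists>t \<le> c * n + c. halted P (run P t (init_state c1 c2)) \<and>
        optimal_seq c1 c2 (output_seq n (run P t (init_state c1 c2)))))"

end

theory Submission
  imports Defs "HOL-Library.Sublist"
begin


definition Ps :: "('a \<Rightarrow> real) \<Rightarrow> 'a list \<Rightarrow> real" where
  "Ps f xs = sum_list (map f xs)"

lemma Ps_simps[simp]: "Ps f [] = 0" "Ps f (x#xs) = f x + Ps f xs" "Ps f (xs@ys) = Ps f xs + Ps f ys"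
  by (auto simp: Ps_def)

fun cost :: "('a \<Rightarrow> real) \<Rightarrow> ('a \<Rightarrow> real) \<Rightarrow> 'a list \<Rightarrow> real" where
  "cost p w [] = 0"
| "cost p w (x#xs) = p x * w x + p x * Ps w xs + cost p w xs"

lemma cost_append: "cost p w (xs @ ys) = cost p w xs + cost p w ys + Ps p xs * Ps w ys"
  by (induction xs) (auto simp: algebra_simps)

lemma Ps_shuffles: "zs \<in> shuffles xs ys \<Longrightarrow> Ps f zs = Ps f xs + Ps f ys"
  by (induction xs ys arbitrary: zs rule: shuffles.induct) auto

definition exc :: "('a \<Rightarrow> real) \<Rightarrow> ('a \<Rightarrow> real) \<Rightarrow> real \<Rightarrow> 'a list \<Rightarrow> real" where
  "exc p w r xs = Ps w xs - r * Ps p xs"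

definition ratio :: "('a \<Rightarrow> real) \<Rightarrow> ('a \<Rightarrow> real) \<Rightarrow> 'a list \<Rightarrow> real" where
  "ratio p w xs = Ps w xs / Ps p xs"

lemma exc_simps[simp]: "exc p w r [] = 0" "exc p w r (xs @ ys) = exc p w r xs + exc p w r ys"
  "exc p w r (x # ys) = (w x - r * p x) + exc p w r ys"
  by (auto simp: exc_def algebra_simps)

lemma Ps_pos: "\<forall>x. p x > 0 \<Longrightarrow> xs \<noteq> [] \<Longrightarrow> Ps p xs > 0"
  by (induction xs) (auto, smt (verit) Ps_simps(1))

lemma Ps_nonneg: "\<forall>x. p x > 0 \<Longrightarrow> Ps p xs \<ge> 0"
  by (induction xs) (auto, smt (verit))

lemma exc_ratio_self: "\<forall>x. p x > 0 \<Longrightarrow> xs \<noteq> [] \<Longrightarrow> exc p w (ratio p w xs) xs = 0"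
  using Ps_pos[of p xs] by (simp add: exc_def ratio_def)

lemma exc_mono_r: "\<forall>x. p x > 0 \<Longrightarrow> r \<le> r' \<Longrightarrow> exc p w r' xs \<le> exc p w r xs"
  using Ps_nonneg[of p xs] by (simp add: exc_def mult_right_mono)

lemma exch_core:
  assumes "s \<in> shuffles a Y" "\<forall>x. p x > 0"
    "\<forall>\<tau>. suffix \<tau> a \<longrightarrow> exc p w r \<tau> \<ge> 0"
    "\<forall>\<pi>. prefix \<pi> Y \<longrightarrow> c + exc p w r \<pi> \<le> 0"
  shows "cost p w s - cost p w (a @ Y) \<ge> c * Ps p a"
  using assms
proof (induction s arbitrary: a Y c)
  case Nil
  then show ?case by simp
next
  case (Cons z s)
  have c0: "c \<le> 0" using Cons.prems(4)[rule_format, of "[]"] by simp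
  from Cons.prems(1) consider
    (L) "a \<noteq> []" "hd a = z" "s \<in> shuffles (tl a) Y"
  | (R) "Y \<noteq> []" "hd Y = z" "s \<in> shuffles a (tl Y)"
    by (auto simp: Cons_in_shuffles_iff)
  then show ?case
  proof cases
    case L
    then obtain a' where a: "a = z # a'" by (cases a) auto
    have IH: "cost p w s - cost p w (a' @ Y) \<ge> c * Ps p a'"
      using Cons.IH[of a' Y c] Cons.prems L a by (auto intro: suffix_ConsI)
    have "Ps w s = Ps w a' + Ps w Y" using L a Ps_shuffles by auto
    moreover have "c * p z \<le> 0" using c0 Cons.prems(2) by (simp add: mult_nonpos_nonneg less_imp_le)
    ultimately show ?thesis using IH a by (simp add: algebra_simps)
  next
    case R
    then obtain Y' where Y: "Y = z # Y'" by (cases Y) auto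
    have IH: "cost p w s - cost p w (a @ Y') \<ge> (c + (w z - r * p z)) * Ps p a"
      apply (rule Cons.IH)
      using Cons.prems R Y apply auto
      by (metis Cons.prems(4) Cons_prefix_Cons add.assoc exc_simps(3))
    have "exc p w r a \<ge> 0" using Cons.prems(3) by auto
    hence "p z * exc p w r a \<ge> 0" using Cons.prems(2) by (simp add: less_imp_le)
    moreover have "Ps w s = Ps w a + Ps w Y'" using R Y Ps_shuffles by auto
    ultimately show ?thesis using IH Y by (simp add: algebra_simps cost_append exc_def)
  qed
qed

lemma exch:
  assumes "s \<in> shuffles a Y" "\<forall>x. p x > 0" "a \<noteq> []"
    "\<forall>\<pi>. prefix \<pi> a \<longrightarrow> exc p w (ratio p w a) \<pi> \<le> 0"
    "\<forall>\<pi>. prefix \<pi> Y \<longrightarrow> exc p w (ratio p w a) \<pi> \<le> 0"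
  shows "cost p w (a @ Y) \<le> cost p w s"
proof -
  have "\<forall>\<tau>. suffix \<tau> a \<longrightarrow> exc p w (ratio p w a) \<tau> \<ge> 0"
  proof (intro allI impI)
    fix \<tau> assume "suffix \<tau> a"
    then obtain \<pi> where a: "a = \<pi> @ \<tau>" by (auto simp: suffix_def)
    have "exc p w (ratio p w a) \<pi> \<le> 0" using assms(4) a by auto
    moreover have "exc p w (ratio p w a) a = 0" using exc_ratio_self assms by blast
    ultimately show "exc p w (ratio p w a) \<tau> \<ge> 0" using a by simp
  qed
  from exch_core[OF assms(1,2) this, of 0] assms(5) show ?thesis by simp
qed

lemma shuffles_split:
  "\<sigma> \<in> shuffles (xs @ xs') ys \<Longrightarrow> \<exists>ys1 ys2 s r. ys = ys1 @ ys2 \<and> \<sigma> = s @ r \<and> s \<in> shuffles xs ys1 \<and> r \<in> shuffles xs' ys2"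
proof (induction \<sigma> arbitrary: xs ys)
  case Nil
  then show ?case by auto
next
  case (Cons z zs)
  note CP = Cons.prems
  note CIH = Cons.IH
  show ?case
  proof (cases "xs = []")
    case True
    then show ?thesis using CP by (intro exI[of _ "[]"] exI[of _ ys] exI[of _ "[]"] exI[of _ "z # zs"]) auto
  next
    case False
    then obtain x xs1 where xs: "xs = x # xs1" by (cases xs) auto
    from CP consider
      (L) "x = z" "zs \<in> shuffles (xs1 @ xs') ys"
    | (R) "ys \<noteq> []" "hd ys = z" "zs \<in> shuffles (xs @ xs') (tl ys)"
      using xs by (auto simp: Cons_in_shuffles_iff)
    then show ?thesis
    proof cases
      case L
      from CIH[OF L(2)] obtain ys1 ys2 s r where
        "ys = ys1 @ ys2" "zs = s @ r" "s \<in> shuffles xs1 ys1" "r \<in> shuffles xs' ys2" by blast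
      then show ?thesis using L xs
        by (intro exI[of _ ys1] exI[of _ ys2] exI[of _ "z # s"] exI[of _ r])
           (auto intro: Cons_in_shuffles_leftI)
    next
      case R
      from CIH[OF R(3)] obtain ys1 ys2 s r where
        h: "tl ys = ys1 @ ys2" "zs = s @ r" "s \<in> shuffles xs ys1" "r \<in> shuffles xs' ys2" by blast
      have "ys = z # ys1 @ ys2" using R h(1) by (cases ys) auto
      then show ?thesis using h
        by (intro exI[of _ "z # ys1"] exI[of _ ys2] exI[of _ "z # s"] exI[of _ r])
           (auto intro: Cons_in_shuffles_rightI)
    qed
  qed
qed

lemma app_shuffles: "r \<in> shuffles A2 B2 \<Longrightarrow> Y @ r \<in> shuffles A2 (Y @ B2)"
  by (induction Y) (auto intro: Cons_in_shuffles_rightI)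

lemma lemT:
  assumes "\<sigma> \<in> shuffles (a @ A2) B" "\<forall>x. p x > 0" "a \<noteq> []"
    "\<forall>\<pi>. prefix \<pi> a \<longrightarrow> exc p w (ratio p w a) \<pi> \<le> 0"
    "\<forall>\<pi>. prefix \<pi> B \<longrightarrow> exc p w (ratio p w a) \<pi> \<le> 0"
  shows "\<exists>\<sigma>'. \<sigma>' \<in> shuffles A2 B \<and> cost p w (a @ \<sigma>') \<le> cost p w \<sigma>"
proof -
  from shuffles_split[OF assms(1)] obtain Y B2 s r where
    sp: "B = Y @ B2" "\<sigma> = s @ r" "s \<in> shuffles a Y" "r \<in> shuffles A2 B2" by blast
  have "\<forall>\<pi>. prefix \<pi> Y \<longrightarrow> exc p w (ratio p w a) \<pi> \<le> 0"
    using assms(5) sp(1) by (metis prefix_append)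
  then have "cost p w (a @ Y) \<le> cost p w s"
    using exch[OF sp(3) assms(2,3,4)] by blast
  moreover have "Ps p s = Ps p a + Ps p Y" using sp(3) Ps_shuffles by blast
  ultimately have "cost p w (a @ Y @ r) \<le> cost p w \<sigma>"
    using sp(2) cost_append[of p w "a @ Y" r] cost_append[of p w s r] by simp
  then show ?thesis using app_shuffles[OF sp(4)] sp(1) by blast
qed

fun mrg :: "('a \<Rightarrow> real) \<Rightarrow> ('a \<Rightarrow> real) \<Rightarrow> 'a list list \<Rightarrow> 'a list list \<Rightarrow> 'a list" where
  "mrg p w [] bs = concat bs"
| "mrg p w as [] = concat as"
| "mrg p w (a#as) (b#bs) = (if Ps w b * Ps p a \<le> Ps w a * Ps p b
      then a @ mrg p w as (b#bs) else b @ mrg p w (a#as) bs)"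

fun good :: "('a \<Rightarrow> real) \<Rightarrow> ('a \<Rightarrow> real) \<Rightarrow> 'a list list \<Rightarrow> bool" where
  "good p w [] = True"
| "good p w (b#bs) = (b \<noteq> [] \<and> (\<forall>\<pi>. prefix \<pi> (concat (b#bs)) \<longrightarrow> exc p w (ratio p w b) \<pi> \<le> 0) \<and> good p w bs)"

lemma Ps_mrg: "Ps f (mrg p w as bs) = Ps f (concat as) + Ps f (concat bs)"
  by (induction p w as bs rule: mrg.induct) auto

lemma ratio_cmp:
  assumes "\<forall>x. p x > 0" "a \<noteq> []" "b \<noteq> []"
  shows "(Ps w b * Ps p a \<le> Ps w a * Ps p b) = (ratio p w b \<le> ratio p w a)"
  using Ps_pos[OF assms(1,2)] Ps_pos[OF assms(1,3)]
  by (simp add: ratio_def divide_simps mult.commute)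

lemma exc_trans:
  assumes "\<forall>x. p x > 0" "r \<le> r'" "exc p w r \<pi> \<le> 0" shows "exc p w r' \<pi> \<le> 0"
  using exc_mono_r[OF assms(1,2), of w \<pi>] assms(3) by simp

theorem mrg_opt:
  assumes "\<forall>x. p x > 0" "good p w BA" "good p w BB" "\<sigma> \<in> shuffles (concat BA) (concat BB)"
  shows "cost p w (mrg p w BA BB) \<le> cost p w \<sigma>"
  using assms
proof (induction p w BA BB arbitrary: \<sigma> rule: mrg.induct)
  case (1 p w bs)
  then show ?case by simp
next
  case (2 p w v va)
  then show ?case by simp
next
  case (3 p w a as b bs)
  note pos = "3.prems"(1)
  let ?A = "concat (a#as)" and ?B = "concat (b#bs)"
  have a: "a \<noteq> []" "\<forall>\<pi>. prefix \<pi> ?A \<longrightarrow> exc p w (ratio p w a) \<pi> \<le> 0" "good p w as"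
    using "3.prems" unfolding good.simps by blast+
  have b: "b \<noteq> []" "\<forall>\<pi>. prefix \<pi> ?B \<longrightarrow> exc p w (ratio p w b) \<pi> \<le> 0" "good p w bs"
    using "3.prems" unfolding good.simps by blast+
  have pa: "\<forall>\<pi>. prefix \<pi> a \<longrightarrow> exc p w (ratio p w a) \<pi> \<le> 0"
    using a(2) by (metis concat.simps(2) prefix_append)
  have pb: "\<forall>\<pi>. prefix \<pi> b \<longrightarrow> exc p w (ratio p w b) \<pi> \<le> 0"
    using b(2) by (metis concat.simps(2) prefix_append)
  show ?case
  proof (cases "Ps w b * Ps p a \<le> Ps w a * Ps p b")
    case True
    hence le: "ratio p w b \<le> ratio p w a" using ratio_cmp pos a b by blast
    have pb': "\<forall>\<pi>. prefix \<pi> ?B \<longrightarrow> exc p w (ratio p w a) \<pi> \<le> 0"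
      using b(2) exc_trans[OF pos le] by blast
    have "\<exists>\<sigma>'. \<sigma>' \<in> shuffles (concat as) ?B \<and> cost p w (a @ \<sigma>') \<le> cost p w \<sigma>"
      apply (rule lemT[OF _ pos a(1) pa pb'])
      using "3.prems"(4) by simp
    then obtain \<sigma>' where s': "\<sigma>' \<in> shuffles (concat as) ?B" "cost p w (a @ \<sigma>') \<le> cost p w \<sigma>" by blast
    have IH: "cost p w (mrg p w as (b#bs)) \<le> cost p w \<sigma>'"
      using "3.IH"(1)[OF True pos a(3) "3.prems"(3) s'(1)] .
    have "Ps w \<sigma>' = Ps w (mrg p w as (b#bs))" using Ps_shuffles[OF s'(1)] Ps_mrg by metis
    then show ?thesis using True IH s'(2) by (simp add: cost_append)
  next
    case False
    hence le: "ratio p w a \<le> ratio p w b" using ratio_cmp[OF pos a(1) b(1), of w] by linarith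
    have pa': "\<forall>\<pi>. prefix \<pi> ?A \<longrightarrow> exc p w (ratio p w b) \<pi> \<le> 0"
      using a(2) exc_trans[OF pos le] by blast
    have "\<exists>\<sigma>'. \<sigma>' \<in> shuffles (concat bs) ?A \<and> cost p w (b @ \<sigma>') \<le> cost p w \<sigma>"
      apply (rule lemT[OF _ pos b(1) pb pa'])
      using "3.prems"(4) by (simp add: shuffles_commutes)
    then obtain \<sigma>' where s': "\<sigma>' \<in> shuffles (concat bs) ?A" "cost p w (b @ \<sigma>') \<le> cost p w \<sigma>" by blast
    have IH: "cost p w (mrg p w (a#as) bs) \<le> cost p w \<sigma>'"
      using "3.IH"(2)[OF False pos "3.prems"(2) b(3)] s'(1) by (simp add: shuffles_commutes)
    have "Ps w \<sigma>' = Ps w (mrg p w (a#as) bs)" using Ps_shuffles[OF s'(1)] Ps_mrg by (metis add.commute)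
    then show ?thesis using False IH s'(2) by (simp add: cost_append)
  qed
qed


definition okb :: "('a \<Rightarrow> real) \<Rightarrow> ('a \<Rightarrow> real) \<Rightarrow> 'a list \<Rightarrow> bool" where
  "okb p w b = (b \<noteq> [] \<and> (\<forall>\<pi>. prefix \<pi> b \<longrightarrow> exc p w (ratio p w b) \<pi> \<le> 0))"

lemma exc_ratio_form:
  assumes "\<forall>x. p x > 0" "x \<noteq> []" shows "exc p w r x = (ratio p w x - r) * Ps p x"
  using Ps_pos[OF assms] by (simp add: exc_def ratio_def algebra_simps)

lemma okb_merge:
  assumes pos: "\<forall>x. p x > 0" and o1: "okb p w b1" and o2: "okb p w b2"
    and le: "ratio p w b2 \<le> ratio p w b1"
  shows "okb p w (b2 @ b1)"
proof -
  let ?r = "ratio p w (b2 @ b1)"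
  have ne: "b1 \<noteq> []" "b2 \<noteq> []" using o1 o2 by (auto simp: okb_def)
  have P: "Ps p b1 > 0" "Ps p b2 > 0" using Ps_pos[OF pos] ne by auto
  have z: "exc p w ?r b2 + exc p w ?r b1 = 0"
    using exc_ratio_self[OF pos, of "b2 @ b1" w] ne by simp
  have e1: "exc p w ?r b1 = (ratio p w b1 - ?r) * Ps p b1" using exc_ratio_form[OF pos ne(1)] .
  have e2: "exc p w ?r b2 = (ratio p w b2 - ?r) * Ps p b2" using exc_ratio_form[OF pos ne(2)] .
  have r1: "ratio p w b2 \<le> ?r"
  proof (rule ccontr)
    assume "\<not> ?thesis"
    then have "(ratio p w b2 - ?r) * Ps p b2 > 0" "(ratio p w b1 - ?r) * Ps p b1 > 0"
      using P le by auto
    then show False using z e1 e2 by linarith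
  qed
  have r2: "?r \<le> ratio p w b1"
  proof (rule ccontr)
    assume "\<not> ?thesis"
    then have "(ratio p w b2 - ?r) * Ps p b2 < 0" "(ratio p w b1 - ?r) * Ps p b1 < 0"
      using P le by (auto simp: mult_neg_pos)
    then show False using z e1 e2 by linarith
  qed
  have "exc p w ?r \<pi> \<le> 0" if "prefix \<pi> (b2 @ b1)" for \<pi>
  proof -
    from that consider "prefix \<pi> b2" | us where "\<pi> = b2 @ us" "prefix us b1"
      by (auto simp: prefix_append)
    then show ?thesis
    proof cases
      case 1
      then have "exc p w (ratio p w b2) \<pi> \<le> 0" using o2 by (auto simp: okb_def)
      then show ?thesis using exc_trans[OF pos r1] by blast
    next
      case 2
      then obtain \<tau> where b1: "b1 = us @ \<tau>" by (auto simp: prefix_def)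
      have "exc p w (ratio p w b1) us \<le> 0" using o1 2 by (auto simp: okb_def)
      moreover have "exc p w (ratio p w b1) b1 = 0" using exc_ratio_self[OF pos ne(1)] .
      ultimately have "exc p w (ratio p w b1) \<tau> \<ge> 0" using b1 by simp
      moreover have "exc p w (ratio p w b1) \<tau> \<le> exc p w ?r \<tau>" using exc_mono_r[OF pos r2] .
      moreover have "exc p w ?r (b2 @ b1) = 0" using exc_ratio_self[OF pos, of "b2 @ b1" w] ne by simp
      ultimately show ?thesis using 2 b1 by simp
    qed
  qed
  then show ?thesis using ne by (auto simp: okb_def)
qed

lemma prefix_concat_exc:
  assumes pos: "\<forall>x. p x > 0" and "\<forall>c\<in>set bs. okb p w c \<and> ratio p w c \<le> r" and "prefix \<pi> (concat bs)"
  shows "exc p w r \<pi> \<le> 0"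
  using assms(2,3)
proof (induction bs arbitrary: \<pi>)
  case Nil
  then show ?case by simp
next
  case (Cons c cs)
  have oc: "okb p w c" "ratio p w c \<le> r" using Cons.prems by auto
  from Cons.prems(2) consider "prefix \<pi> c" | us where "\<pi> = c @ us" "prefix us (concat cs)"
    by (auto simp: prefix_append)
  then show ?case
  proof cases
    case 1
    then have "exc p w (ratio p w c) \<pi> \<le> 0" using oc by (auto simp: okb_def)
    then show ?thesis using exc_trans[OF pos oc(2)] by blast
  next
    case 2
    have "exc p w (ratio p w c) c = 0" using exc_ratio_self[OF pos] oc by (auto simp: okb_def)
    then have "exc p w r c \<le> 0" using exc_mono_r[OF pos oc(2), of w c] by simp
    moreover have "exc p w r us \<le> 0" using Cons.IH[OF _ 2(2)] Cons.prems(1) by auto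
    ultimately show ?thesis using 2 by simp
  qed
qed

lemma good_sorted:
  assumes pos: "\<forall>x. p x > 0" and "\<forall>b\<in>set bl. okb p w b"
    and "sorted_wrt (\<lambda>x y. ratio p w y < ratio p w x) bl"
  shows "good p w bl"
  using assms(2,3)
proof (induction bl)
  case Nil
  then show ?case by simp
next
  case (Cons b bs)
  have "\<forall>c\<in>set (b#bs). okb p w c \<and> ratio p w c \<le> ratio p w b"
    using Cons.prems by (auto simp: less_imp_le)
  then have "\<forall>\<pi>. prefix \<pi> (concat (b#bs)) \<longrightarrow> exc p w (ratio p w b) \<pi> \<le> 0"
    using prefix_concat_exc[OF pos] by blast
  then show ?case using Cons by (auto simp: okb_def)
qed

fun mergeTop :: "(nat \<Rightarrow> real) \<Rightarrow> (nat \<Rightarrow> real) \<Rightarrow> nat list list \<Rightarrow> nat list list" where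
  "mergeTop pf wt (b1 # b2 # rest) = (if Ps wt b2 * Ps pf b1 \<le> Ps wt b1 * Ps pf b2
     then mergeTop pf wt ((b2 @ b1) # rest) else b1 # b2 # rest)"
| "mergeTop pf wt st = st"

fun decomp :: "(nat \<Rightarrow> real) \<Rightarrow> (nat \<Rightarrow> real) \<Rightarrow> nat \<Rightarrow> nat list list" where
  "decomp pf wt 0 = []"
| "decomp pf wt (Suc i) = mergeTop pf wt ([i] # decomp pf wt i)"

definition dinv :: "(nat \<Rightarrow> real) \<Rightarrow> (nat \<Rightarrow> real) \<Rightarrow> nat list list \<Rightarrow> nat \<Rightarrow> bool" where
  "dinv pf wt st i = (concat (rev st) = [0..<i] \<and> (\<forall>b\<in>set st. okb pf wt b)
     \<and> sorted_wrt (\<lambda>x y. ratio pf wt x < ratio pf wt y) st)"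

lemma mergeTop_inv:
  shows "\<forall>x. pf x > 0 \<Longrightarrow> concat (rev st) = [0..<i] \<Longrightarrow> (\<forall>b\<in>set st. okb pf wt b)
     \<Longrightarrow> sorted_wrt (\<lambda>x y. ratio pf wt x < ratio pf wt y) (tl st) \<Longrightarrow> dinv pf wt (mergeTop pf wt st) i"
proof (induction pf wt st rule: mergeTop.induct)
  case (1 pf wt b1 b2 rest)
  note pos = "1.prems"(1)
  show ?case
  proof (cases "Ps wt b2 * Ps pf b1 \<le> Ps wt b1 * Ps pf b2")
    case True
    have ne: "b1 \<noteq> []" "b2 \<noteq> []" using "1.prems"(3) by (auto simp: okb_def)
    have le: "ratio pf wt b2 \<le> ratio pf wt b1" using ratio_cmp[OF pos ne, of wt] True by simp
    have "okb pf wt (b2 @ b1)" using okb_merge[OF pos _ _ le] "1.prems"(3) by auto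
    then have "dinv pf wt (mergeTop pf wt ((b2 @ b1) # rest)) i"
      using "1.IH"[OF True pos] "1.prems" by auto
    then show ?thesis using True by simp
  next
    case False
    have ne: "b1 \<noteq> []" "b2 \<noteq> []" using "1.prems"(3) by (auto simp: okb_def)
    have lt: "ratio pf wt b1 < ratio pf wt b2" using ratio_cmp[OF pos ne, of wt] False by simp
    have "sorted_wrt (\<lambda>x y. ratio pf wt x < ratio pf wt y) (b1 # b2 # rest)"
      using "1.prems"(4) lt by auto
    then show ?thesis using False "1.prems" by (simp add: dinv_def)
  qed
next
  case ("2_1" pf wt)
  then show ?case by (simp add: dinv_def)
next
  case ("2_2" pf wt v)
  then show ?case by (simp add: dinv_def)
qed

lemma decomp_inv: assumes pos: "\<forall>x. pf x > 0" shows "dinv pf wt (decomp pf wt i) i"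
proof (induction i)
  case 0
  then show ?case by (simp add: dinv_def)
next
  case (Suc i)
  have "okb pf wt [i]" using pos[rule_format, of i] by (auto simp: okb_def prefix_Cons exc_def ratio_def)
  then show ?case using Suc mergeTop_inv[OF pos, of "[i] # decomp pf wt i" "Suc i" wt]
    by (auto simp: dinv_def)
qed

lemma decomp_good: assumes pos: "\<forall>x. pf x > 0"
  shows "good pf wt (rev (decomp pf wt i))" "concat (rev (decomp pf wt i)) = [0..<i]"
proof -
  have d: "dinv pf wt (decomp pf wt i) i" using decomp_inv[OF pos] .
  show "good pf wt (rev (decomp pf wt i))"
    apply (rule good_sorted[OF pos])
    using d by (auto simp: dinv_def sorted_wrt_rev)
  show "concat (rev (decomp pf wt i)) = [0..<i]" using d by (simp add: dinv_def)
qed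


definition prog :: "instr list" where
  "prog = [IConst 1 1,
    IConst 2 4,
    ILoad 4 0,
    IConst 5 0,
    IConst 12 (-4),
    IConst 8 0,
    Jmp 60,
    IAdd 11 7 0,
    IAdd 5 4 0,
    ILoad 4 1,
    IConst 12 (-6),
    IConst 8 1,
    Jmp 60,
    IAdd 21 7 0,
    IConst 13 0,
    IConst 14 0,
    IConst 15 (-4),
    IConst 16 (-6),
    IConst 17 0,
    IConst 18 0,
    IConst 19 2,
    JmpILe 11 13 33,
    JmpILe 21 14 35,
    RLoad 2 15,
    ISub 9 15 1,
    RLoad 3 9,
    RLoad 4 16,
    ISub 9 16 1,
    RLoad 5 9,
    RMul 6 3 4,
    RMul 7 5 2,
    JmpRLe 7 6 35,
    Jmp 47,
    JmpILe 21 14 59,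
    Jmp 47,
    ISub 9 15 1,
    ILoad 20 9,
    JmpILe 20 17 44,
    IStore 0 19,
    IAdd 9 19 1,
    IStore 17 9,
    IAdd 19 9 1,
    IAdd 17 17 1,
    Jmp 37,
    IAdd 13 13 1,
    ISub 15 15 2,
    Jmp 21,
    ISub 9 16 1,
    ILoad 20 9,
    JmpILe 20 18 56,
    IStore 1 19,
    IAdd 9 19 1,
    IStore 18 9,
    IAdd 19 9 1,
    IAdd 18 18 1,
    Jmp 49,
    IAdd 14 14 1,
    ISub 16 16 2,
    Jmp 21,
    Halt,
    IAdd 6 12 2,
    IConst 7 0,
    IConst 3 0,
    JmpILe 4 3 96,
    IAdd 9 5 3,
    IAdd 9 9 9,
    RLoad 0 9,
    IAdd 9 9 1,
    RLoad 1 9,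
    ISub 6 6 2,
    IAdd 7 7 1,
    IAdd 3 3 1,
    ISub 9 6 1,
    IStore 3 9,
    RStore 0 6,
    RStore 1 9,
    JmpILe 7 1 63,
    IAdd 9 6 2,
    ISub 10 9 1,
    ISub 23 6 1,
    RLoad 2 9,
    RLoad 3 10,
    RLoad 4 6,
    RLoad 5 23,
    RMul 6 3 4,
    RMul 7 5 2,
    JmpRLe 6 7 88,
    Jmp 63,
    IStore 3 10,
    RAdd 2 2 4,
    RAdd 3 3 5,
    RStore 2 9,
    RStore 3 10,
    IAdd 6 6 2,
    ISub 7 7 1,
    Jmp 76,
    JmpILe 8 0 7,
    Jmp 13]"

lemma length_prog[simp]: "length prog = 98" by (simp add: prog_def)

lemma prog_0[simp]: "prog ! 0 = IConst 1 1" by (simp add: prog_def)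
lemma prog_1[simp]: "prog ! 1 = IConst 2 4" by (simp add: prog_def)
lemma prog_2[simp]: "prog ! 2 = ILoad 4 0" by (simp add: prog_def)
lemma prog_3[simp]: "prog ! 3 = IConst 5 0" by (simp add: prog_def)
lemma prog_4[simp]: "prog ! 4 = IConst 12 (-4)" by (simp add: prog_def)
lemma prog_5[simp]: "prog ! 5 = IConst 8 0" by (simp add: prog_def)
lemma prog_6[simp]: "prog ! 6 = Jmp 60" by (simp add: prog_def)
lemma prog_7[simp]: "prog ! 7 = IAdd 11 7 0" by (simp add: prog_def)
lemma prog_8[simp]: "prog ! 8 = IAdd 5 4 0" by (simp add: prog_def)
lemma prog_9[simp]: "prog ! 9 = ILoad 4 1" by (simp add: prog_def)
lemma prog_10[simp]: "prog ! 10 = IConst 12 (-6)" by (simp add: prog_def)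
lemma prog_11[simp]: "prog ! 11 = IConst 8 1" by (simp add: prog_def)
lemma prog_12[simp]: "prog ! 12 = Jmp 60" by (simp add: prog_def)
lemma prog_13[simp]: "prog ! 13 = IAdd 21 7 0" by (simp add: prog_def)
lemma prog_14[simp]: "prog ! 14 = IConst 13 0" by (simp add: prog_def)
lemma prog_15[simp]: "prog ! 15 = IConst 14 0" by (simp add: prog_def)
lemma prog_16[simp]: "prog ! 16 = IConst 15 (-4)" by (simp add: prog_def)
lemma prog_17[simp]: "prog ! 17 = IConst 16 (-6)" by (simp add: prog_def)
lemma prog_18[simp]: "prog ! 18 = IConst 17 0" by (simp add: prog_def)
lemma prog_19[simp]: "prog ! 19 = IConst 18 0" by (simp add: prog_def)
lemma prog_20[simp]: "prog ! 20 = IConst 19 2" by (simp add: prog_def)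
lemma prog_21[simp]: "prog ! 21 = JmpILe 11 13 33" by (simp add: prog_def)
lemma prog_22[simp]: "prog ! 22 = JmpILe 21 14 35" by (simp add: prog_def)
lemma prog_23[simp]: "prog ! 23 = RLoad 2 15" by (simp add: prog_def)
lemma prog_24[simp]: "prog ! 24 = ISub 9 15 1" by (simp add: prog_def)
lemma prog_25[simp]: "prog ! 25 = RLoad 3 9" by (simp add: prog_def)
lemma prog_26[simp]: "prog ! 26 = RLoad 4 16" by (simp add: prog_def)
lemma prog_27[simp]: "prog ! 27 = ISub 9 16 1" by (simp add: prog_def)
lemma prog_28[simp]: "prog ! 28 = RLoad 5 9" by (simp add: prog_def)
lemma prog_29[simp]: "prog ! 29 = RMul 6 3 4" by (simp add: prog_def)
lemma prog_30[simp]: "prog ! 30 = RMul 7 5 2" by (simp add: prog_def)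
lemma prog_31[simp]: "prog ! 31 = JmpRLe 7 6 35" by (simp add: prog_def)
lemma prog_32[simp]: "prog ! 32 = Jmp 47" by (simp add: prog_def)
lemma prog_33[simp]: "prog ! 33 = JmpILe 21 14 59" by (simp add: prog_def)
lemma prog_34[simp]: "prog ! 34 = Jmp 47" by (simp add: prog_def)
lemma prog_35[simp]: "prog ! 35 = ISub 9 15 1" by (simp add: prog_def)
lemma prog_36[simp]: "prog ! 36 = ILoad 20 9" by (simp add: prog_def)
lemma prog_37[simp]: "prog ! 37 = JmpILe 20 17 44" by (simp add: prog_def)
lemma prog_38[simp]: "prog ! 38 = IStore 0 19" by (simp add: prog_def)
lemma prog_39[simp]: "prog ! 39 = IAdd 9 19 1" by (simp add: prog_def)
lemma prog_40[simp]: "prog ! 40 = IStore 17 9" by (simp add: prog_def)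
lemma prog_41[simp]: "prog ! 41 = IAdd 19 9 1" by (simp add: prog_def)
lemma prog_42[simp]: "prog ! 42 = IAdd 17 17 1" by (simp add: prog_def)
lemma prog_43[simp]: "prog ! 43 = Jmp 37" by (simp add: prog_def)
lemma prog_44[simp]: "prog ! 44 = IAdd 13 13 1" by (simp add: prog_def)
lemma prog_45[simp]: "prog ! 45 = ISub 15 15 2" by (simp add: prog_def)
lemma prog_46[simp]: "prog ! 46 = Jmp 21" by (simp add: prog_def)
lemma prog_47[simp]: "prog ! 47 = ISub 9 16 1" by (simp add: prog_def)
lemma prog_48[simp]: "prog ! 48 = ILoad 20 9" by (simp add: prog_def)
lemma prog_49[simp]: "prog ! 49 = JmpILe 20 18 56" by (simp add: prog_def)
lemma prog_50[simp]: "prog ! 50 = IStore 1 19" by (simp add: prog_def)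
lemma prog_51[simp]: "prog ! 51 = IAdd 9 19 1" by (simp add: prog_def)
lemma prog_52[simp]: "prog ! 52 = IStore 18 9" by (simp add: prog_def)
lemma prog_53[simp]: "prog ! 53 = IAdd 19 9 1" by (simp add: prog_def)
lemma prog_54[simp]: "prog ! 54 = IAdd 18 18 1" by (simp add: prog_def)
lemma prog_55[simp]: "prog ! 55 = Jmp 49" by (simp add: prog_def)
lemma prog_56[simp]: "prog ! 56 = IAdd 14 14 1" by (simp add: prog_def)
lemma prog_57[simp]: "prog ! 57 = ISub 16 16 2" by (simp add: prog_def)
lemma prog_58[simp]: "prog ! 58 = Jmp 21" by (simp add: prog_def)
lemma prog_59[simp]: "prog ! 59 = Halt" by (simp add: prog_def)
lemma prog_60[simp]: "prog ! 60 = IAdd 6 12 2" by (simp add: prog_def)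
lemma prog_61[simp]: "prog ! 61 = IConst 7 0" by (simp add: prog_def)
lemma prog_62[simp]: "prog ! 62 = IConst 3 0" by (simp add: prog_def)
lemma prog_63[simp]: "prog ! 63 = JmpILe 4 3 96" by (simp add: prog_def)
lemma prog_64[simp]: "prog ! 64 = IAdd 9 5 3" by (simp add: prog_def)
lemma prog_65[simp]: "prog ! 65 = IAdd 9 9 9" by (simp add: prog_def)
lemma prog_66[simp]: "prog ! 66 = RLoad 0 9" by (simp add: prog_def)
lemma prog_67[simp]: "prog ! 67 = IAdd 9 9 1" by (simp add: prog_def)
lemma prog_68[simp]: "prog ! 68 = RLoad 1 9" by (simp add: prog_def)
lemma prog_69[simp]: "prog ! 69 = ISub 6 6 2" by (simp add: prog_def)
lemma prog_70[simp]: "prog ! 70 = IAdd 7 7 1" by (simp add: prog_def)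
lemma prog_71[simp]: "prog ! 71 = IAdd 3 3 1" by (simp add: prog_def)
lemma prog_72[simp]: "prog ! 72 = ISub 9 6 1" by (simp add: prog_def)
lemma prog_73[simp]: "prog ! 73 = IStore 3 9" by (simp add: prog_def)
lemma prog_74[simp]: "prog ! 74 = RStore 0 6" by (simp add: prog_def)
lemma prog_75[simp]: "prog ! 75 = RStore 1 9" by (simp add: prog_def)
lemma prog_76[simp]: "prog ! 76 = JmpILe 7 1 63" by (simp add: prog_def)
lemma prog_77[simp]: "prog ! 77 = IAdd 9 6 2" by (simp add: prog_def)
lemma prog_78[simp]: "prog ! 78 = ISub 10 9 1" by (simp add: prog_def)
lemma prog_79[simp]: "prog ! 79 = ISub 23 6 1" by (simp add: prog_def)
lemma prog_80[simp]: "prog ! 80 = RLoad 2 9" by (simp add: prog_def)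
lemma prog_81[simp]: "prog ! 81 = RLoad 3 10" by (simp add: prog_def)
lemma prog_82[simp]: "prog ! 82 = RLoad 4 6" by (simp add: prog_def)
lemma prog_83[simp]: "prog ! 83 = RLoad 5 23" by (simp add: prog_def)
lemma prog_84[simp]: "prog ! 84 = RMul 6 3 4" by (simp add: prog_def)
lemma prog_85[simp]: "prog ! 85 = RMul 7 5 2" by (simp add: prog_def)
lemma prog_86[simp]: "prog ! 86 = JmpRLe 6 7 88" by (simp add: prog_def)
lemma prog_87[simp]: "prog ! 87 = Jmp 63" by (simp add: prog_def)
lemma prog_88[simp]: "prog ! 88 = IStore 3 10" by (simp add: prog_def)
lemma prog_89[simp]: "prog ! 89 = RAdd 2 2 4" by (simp add: prog_def)
lemma prog_90[simp]: "prog ! 90 = RAdd 3 3 5" by (simp add: prog_def)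
lemma prog_91[simp]: "prog ! 91 = RStore 2 9" by (simp add: prog_def)
lemma prog_92[simp]: "prog ! 92 = RStore 3 10" by (simp add: prog_def)
lemma prog_93[simp]: "prog ! 93 = IAdd 6 6 2" by (simp add: prog_def)
lemma prog_94[simp]: "prog ! 94 = ISub 7 7 1" by (simp add: prog_def)
lemma prog_95[simp]: "prog ! 95 = Jmp 76" by (simp add: prog_def)
lemma prog_96[simp]: "prog ! 96 = JmpILe 8 0 7" by (simp add: prog_def)
lemma prog_97[simp]: "prog ! 97 = Jmp 13" by (simp add: prog_def)

lemma run_0[simp]: "run P 0 s = s" by (simp add: run_def)
lemma run_Suc: "run P (Suc n) s = run P n (step P s)" by (simp add: run_def funpow_Suc_right del: funpow.simps)
lemma run_add: "run P (m + n) s = run P n (run P m s)" by (simp add: run_def add.commute[of m n] funpow_add)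
lemma run_numeral: "run P (numeral k) s = run P (pred_numeral k) (step P s)"
  by (simp add: numeral_eq_Suc run_Suc)
lemma run_one: "run P 1 s = step P s" by (simp add: run_def)

lemma step_prog: "pc s < 98 \<Longrightarrow> prog ! pc s \<noteq> Halt \<Longrightarrow> step prog s = exec (prog ! pc s) s"
  by (simp add: step_def halted_def)

lemmas run_num = run_numeral run_one run_Suc pred_numeral_simps


lemma seg_push:
  assumes "pc s = 63" "ireg s 1 = 1" "ireg s 2 = 4" "ireg s 3 = int i" "ireg s 4 = int len"
    "ireg s 5 = off" "ireg s 6 = t" "ireg s 7 = h" "i < len"
  shows "pc (run prog 13 s) = 76"
    "ireg (run prog 13 s) = (ireg s)(9 := t - 5, 6 := t - 4, 7 := h + 1, 3 := int i + 1)"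
    "imem (run prog 13 s) = (imem s)(t - 5 := int i + 1)"
    "rmem (run prog 13 s) = (rmem s)(t - 4 := rmem s (2 * (off + int i)), t - 5 := rmem s (2 * (off + int i) + 1))"
  using assms by (simp_all add: run_num step_prog fun_eq_iff algebra_simps)

lemma seg_done:
  assumes "pc s = 63" "ireg s 3 = int i" "ireg s 4 = int len" "len \<le> i"
  shows "run prog 1 s = s\<lparr>pc := 96\<rparr>"
  using assms by (simp add: run_num step_prog)

lemma seg_inner_exit1:
  assumes "pc s = 76" "ireg s 1 = 1" "ireg s 7 = h" "h \<le> 1"
  shows "run prog 1 s = s\<lparr>pc := 63\<rparr>"
  using assms by (simp add: run_num step_prog)

lemma seg_inner_exit2:
  assumes "pc s = 76" "ireg s 1 = 1" "ireg s 2 = 4" "ireg s 6 = t" "ireg s 7 = h" "h > 1"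
    "\<not> rmem s (t + 3) * rmem s t \<le> rmem s (t - 1) * rmem s (t + 4)"
  shows "pc (run prog 12 s) = 63" "\<forall>r. r \<notin> {9, 10, 23} \<longrightarrow> ireg (run prog 12 s) r = ireg s r"
    "imem (run prog 12 s) = imem s" "rmem (run prog 12 s) = rmem s"
  using assms by (simp_all add: run_num step_prog algebra_simps)

lemma seg_merge:
  assumes "pc s = 76" "ireg s 1 = 1" "ireg s 2 = 4" "ireg s 3 = int i" "ireg s 6 = t" "ireg s 7 = h" "h > 1"
    "rmem s (t + 3) * rmem s t \<le> rmem s (t - 1) * rmem s (t + 4)"
  shows "pc (run prog 19 s) = 76" "\<forall>r. r \<notin> {9, 10, 23, 6, 7} \<longrightarrow> ireg (run prog 19 s) r = ireg s r"
    "ireg (run prog 19 s) 6 = t + 4" "ireg (run prog 19 s) 7 = h - 1"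
    "imem (run prog 19 s) = (imem s)(t + 3 := int i)"
    "rmem (run prog 19 s) = (rmem s)(t + 4 := rmem s (t + 4) + rmem s t, t + 3 := rmem s (t + 3) + rmem s (t - 1))"
  using assms by (simp_all add: run_num step_prog fun_eq_iff algebra_simps)


lemma seg_entry:
  assumes "pc s = 60" "ireg s 2 = 4" "ireg s 12 = base"
  shows "pc (run prog 3 s) = 63"
    "ireg (run prog 3 s) = (ireg s)(6 := base + 4, 7 := 0, 3 := 0)"
    "imem (run prog 3 s) = imem s" "rmem (run prog 3 s) = rmem s"
  using assms by (simp_all add: run_num step_prog)


lemma Ps_map: "Ps f (map g xs) = Ps (f \<circ> g) xs"
  by (simp add: Ps_def)

lemma exc_map: "exc p w r (map g xs) = exc (p \<circ> g) (w \<circ> g) r xs"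
  by (simp add: exc_def Ps_map)

lemma ratio_map: "ratio p w (map g xs) = ratio (p \<circ> g) (w \<circ> g) xs"
  by (simp add: ratio_def Ps_map)

lemma good_map: "good (p \<circ> g) (w \<circ> g) bl \<Longrightarrow> good p w (map (map g) bl)"
proof (induction bl)
  case Nil
  then show ?case by simp
next
  case (Cons b bs)
  have "\<forall>\<pi>. prefix \<pi> (concat (map (map g) (b # bs))) \<longrightarrow> exc p w (ratio p w (map g b)) \<pi> \<le> 0"
  proof (intro allI impI)
    fix \<pi> assume "prefix \<pi> (concat (map (map g) (b # bs)))"
    then have "prefix \<pi> (map g (concat (b # bs)))" by (simp add: map_concat)
    then obtain \<pi>' where "prefix \<pi>' (concat (b # bs))" "\<pi> = map g \<pi>'"
      using prefix_map_rightE by blast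
    then show "exc p w (ratio p w (map g b)) \<pi> \<le> 0"
      using Cons.prems by (simp add: exc_map ratio_map comp_def)
  qed
  then show ?case using Cons by simp
qed

lemma app_shuffles_left: "r \<in> shuffles A B \<Longrightarrow> Y @ r \<in> shuffles (Y @ A) B"
  by (induction Y) (auto intro: Cons_in_shuffles_leftI)

lemma mrg_shuffles: "mrg p w A B \<in> shuffles (concat A) (concat B)"
proof (induction p w A B rule: mrg.induct)
  case (3 p w a as b bs)
  then show ?case
    by (cases "Ps w b * Ps p a \<le> Ps w a * Ps p b")
       (auto intro: app_shuffles_left app_shuffles)
qed auto

lemma cost_sum: "cost p w xs = (\<Sum>k<length xs. w (xs ! k) * (\<Sum>l\<le>k. p (xs ! l)))"
proof (induction xs rule: rev_induct)
  case Nil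
  then show ?case by simp
next
  case (snoc x xs)
  have c: "cost p w (xs @ [x]) = cost p w xs + p x * w x + Ps p xs * w x"
    by (simp add: cost_append)
  have s1: "(\<Sum>k<length xs. w ((xs @ [x]) ! k) * (\<Sum>l\<le>k. p ((xs @ [x]) ! l)))
          = (\<Sum>k<length xs. w (xs ! k) * (\<Sum>l\<le>k. p (xs ! l)))"
    by (intro sum.cong refl) (simp add: nth_append)
  have s2: "(\<Sum>l\<le>length xs. p ((xs @ [x]) ! l)) = Ps p xs + p x"
  proof -
    have "(\<Sum>l\<le>length xs. p ((xs @ [x]) ! l)) = (\<Sum>l<length xs. p ((xs @ [x]) ! l)) + p x"
      by (simp add: lessThan_Suc_atMost[symmetric])
    also have "(\<Sum>l<length xs. p ((xs @ [x]) ! l)) = (\<Sum>l<length xs. p (xs ! l))"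
      by (intro sum.cong refl) (simp add: nth_append)
    also have "\<dots> = Ps p xs"
      by (simp add: Ps_def sum_list_sum_nth atLeast0LessThan)
    finally show ?thesis .
  qed
  show ?case using snoc c s1 s2 by (simp add: algebra_simps)
qed


lemma step0: "pc s = 0 \<Longrightarrow> step prog s = s\<lparr>ireg := (ireg s)(1 := 1), pc := 1\<rparr>"
  by (simp add: step_prog)
lemma step1: assumes "pc s = 1" shows "step prog s = s\<lparr>ireg := (ireg s)(2 := 4), pc := 2\<rparr>"
proof -
  have i: "prog ! pc s = IConst 2 4" using assms prog_1 by metis
  have "pc s < 98" using assms by simp
  from step_prog[OF this] i have "step prog s = exec (IConst 2 4) s" by simp
  then show ?thesis using assms by simp
qed

lemma seg_init:
  assumes "pc s = 0" "ireg s 0 = 0"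
  shows "pc (run prog 7 s) = 60" "ireg (run prog 7 s) 1 = 1" "ireg (run prog 7 s) 2 = 4"
    "ireg (run prog 7 s) 4 = imem s 0" "ireg (run prog 7 s) 5 = 0" "ireg (run prog 7 s) 12 = -4"
    "ireg (run prog 7 s) 8 = 0" "ireg (run prog 7 s) 0 = 0"
    "imem (run prog 7 s) = imem s" "rmem (run prog 7 s) = rmem s"
  using assms by (simp_all add: run_num step_prog step0 step1)

lemma seg_ret1:
  assumes "pc s = 96" "ireg s 8 = 0" "ireg s 0 = 0"
  shows "run prog 1 s = s\<lparr>pc := 7\<rparr>"
  using assms by (simp add: run_num step_prog)

lemma seg_mid:
  assumes "pc s = 7" "ireg s 0 = 0" "ireg s 1 = 1"
  shows "pc (run prog 6 s) = 60" "ireg (run prog 6 s) 11 = ireg s 7" "ireg (run prog 6 s) 5 = ireg s 4"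
    "ireg (run prog 6 s) 4 = imem s 1" "ireg (run prog 6 s) 12 = -6" "ireg (run prog 6 s) 8 = 1"
    "\<forall>r. r \<notin> {11, 5, 4, 12, 8} \<longrightarrow> ireg (run prog 6 s) r = ireg s r"
    "imem (run prog 6 s) = imem s" "rmem (run prog 6 s) = rmem s"
  using assms by (simp_all add: run_num step_prog)

lemma seg_ret2:
  assumes "pc s = 96" "ireg s 8 = 1" "ireg s 0 = 0"
  shows "run prog 2 s = s\<lparr>pc := 13\<rparr>"
  using assms by (simp add: run_num step_prog)

lemma seg_minit:
  assumes "pc s = 13" "ireg s 0 = 0"
  shows "pc (run prog 8 s) = 21" "ireg (run prog 8 s) 21 = ireg s 7"
    "ireg (run prog 8 s) 13 = 0" "ireg (run prog 8 s) 14 = 0" "ireg (run prog 8 s) 15 = -4"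
    "ireg (run prog 8 s) 16 = -6" "ireg (run prog 8 s) 17 = 0" "ireg (run prog 8 s) 18 = 0"
    "ireg (run prog 8 s) 19 = 2"
    "\<forall>r. r \<notin> {21, 13, 14, 15, 16, 17, 18, 19} \<longrightarrow> ireg (run prog 8 s) r = ireg s r"
    "imem (run prog 8 s) = imem s" "rmem (run prog 8 s) = rmem s"
  using assms by (simp_all add: run_num step_prog)

lemma seg_mend:
  assumes "pc s = 21" "ireg s 11 \<le> ireg s 13" "ireg s 21 \<le> ireg s 14"
  shows "run prog 2 s = s\<lparr>pc := 59\<rparr>"
  using assms by (simp add: run_num step_prog)

lemma seg_mAex:
  assumes "pc s = 21" "ireg s 11 \<le> ireg s 13" "\<not> ireg s 21 \<le> ireg s 14" "ireg s 1 = 1"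
  shows "pc (run prog 5 s) = 49" "\<forall>r. r \<notin> {9, 20} \<longrightarrow> ireg (run prog 5 s) r = ireg s r"
    "ireg (run prog 5 s) 20 = imem s (ireg s 16 - 1)"
    "imem (run prog 5 s) = imem s" "rmem (run prog 5 s) = rmem s"
  using assms by (simp_all add: run_num step_prog)

lemma seg_mBex:
  assumes "pc s = 21" "\<not> ireg s 11 \<le> ireg s 13" "ireg s 21 \<le> ireg s 14" "ireg s 1 = 1"
  shows "pc (run prog 4 s) = 37" "\<forall>r. r \<notin> {9, 20} \<longrightarrow> ireg (run prog 4 s) r = ireg s r"
    "ireg (run prog 4 s) 20 = imem s (ireg s 15 - 1)"
    "imem (run prog 4 s) = imem s" "rmem (run prog 4 s) = rmem s"
  using assms by (simp_all add: run_num step_prog)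

lemma seg_mcmpA:
  assumes "pc s = 21" "\<not> ireg s 11 \<le> ireg s 13" "\<not> ireg s 21 \<le> ireg s 14" "ireg s 1 = 1"
    "rmem s (ireg s 16 - 1) * rmem s (ireg s 15) \<le> rmem s (ireg s 15 - 1) * rmem s (ireg s 16)"
  shows "pc (run prog 13 s) = 37" "\<forall>r. r \<notin> {9, 20} \<longrightarrow> ireg (run prog 13 s) r = ireg s r"
    "ireg (run prog 13 s) 20 = imem s (ireg s 15 - 1)"
    "imem (run prog 13 s) = imem s" "rmem (run prog 13 s) = rmem s"
  using assms by (simp_all add: run_num step_prog)

lemma seg_mcmpB:
  assumes "pc s = 21" "\<not> ireg s 11 \<le> ireg s 13" "\<not> ireg s 21 \<le> ireg s 14" "ireg s 1 = 1"
    "\<not> rmem s (ireg s 16 - 1) * rmem s (ireg s 15) \<le> rmem s (ireg s 15 - 1) * rmem s (ireg s 16)"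
  shows "pc (run prog 14 s) = 49" "\<forall>r. r \<notin> {9, 20} \<longrightarrow> ireg (run prog 14 s) r = ireg s r"
    "ireg (run prog 14 s) 20 = imem s (ireg s 16 - 1)"
    "imem (run prog 14 s) = imem s" "rmem (run prog 14 s) = rmem s"
  using assms by (simp_all add: run_num step_prog)

lemma seg_aout:
  assumes "pc s = 37" "\<not> ireg s 20 \<le> ireg s 17" "ireg s 0 = 0" "ireg s 1 = 1"
  shows "pc (run prog 7 s) = 37" "\<forall>r. r \<notin> {9, 17, 19} \<longrightarrow> ireg (run prog 7 s) r = ireg s r"
    "ireg (run prog 7 s) 17 = ireg s 17 + 1" "ireg (run prog 7 s) 19 = ireg s 19 + 2"
    "imem (run prog 7 s) = (imem s)(ireg s 19 := 0, ireg s 19 + 1 := ireg s 17)"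
    "rmem (run prog 7 s) = rmem s"
  using assms by (simp_all add: run_num step_prog fun_eq_iff)

lemma seg_aexit:
  assumes "pc s = 37" "ireg s 20 \<le> ireg s 17" "ireg s 1 = 1" "ireg s 2 = 4"
  shows "pc (run prog 4 s) = 21" "\<forall>r. r \<notin> {13, 15} \<longrightarrow> ireg (run prog 4 s) r = ireg s r"
    "ireg (run prog 4 s) 13 = ireg s 13 + 1" "ireg (run prog 4 s) 15 = ireg s 15 - 4"
    "imem (run prog 4 s) = imem s" "rmem (run prog 4 s) = rmem s"
  using assms by (simp_all add: run_num step_prog)

lemma seg_bout:
  assumes "pc s = 49" "\<not> ireg s 20 \<le> ireg s 18" "ireg s 1 = 1"
  shows "pc (run prog 7 s) = 49" "\<forall>r. r \<notin> {9, 18, 19} \<longrightarrow> ireg (run prog 7 s) r = ireg s r"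
    "ireg (run prog 7 s) 18 = ireg s 18 + 1" "ireg (run prog 7 s) 19 = ireg s 19 + 2"
    "imem (run prog 7 s) = (imem s)(ireg s 19 := 1, ireg s 19 + 1 := ireg s 18)"
    "rmem (run prog 7 s) = rmem s"
  using assms by (simp_all add: run_num step_prog fun_eq_iff)

lemma seg_bexit:
  assumes "pc s = 49" "ireg s 20 \<le> ireg s 18" "ireg s 1 = 1" "ireg s 2 = 4"
  shows "pc (run prog 4 s) = 21" "\<forall>r. r \<notin> {14, 16} \<longrightarrow> ireg (run prog 4 s) r = ireg s r"
    "ireg (run prog 4 s) 14 = ireg s 14 + 1" "ireg (run prog 4 s) 16 = ireg s 16 - 4"
    "imem (run prog 4 s) = imem s" "rmem (run prog 4 s) = rmem s"
  using assms by (simp_all add: run_num step_prog)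


definition reach :: "state \<Rightarrow> state \<Rightarrow> nat \<Rightarrow> bool" where
  "reach s s' k \<longleftrightarrow> (\<exists>t\<le>k. run prog t s = s')"

lemma reach_run: "reach s (run prog n s) n" by (auto simp: reach_def)
lemma reach_refl: "reach s s k" by (auto simp: reach_def intro: exI[of _ 0])
lemma reach_trans: "reach s s1 k1 \<Longrightarrow> reach s1 s2 k2 \<Longrightarrow> reach s s2 (k1 + k2)"
proof -
  assume "reach s s1 k1" "reach s1 s2 k2"
  then obtain t1 t2 where "t1 \<le> k1" "run prog t1 s = s1" "t2 \<le> k2" "run prog t2 s1 = s2"
    unfolding reach_def by blast
  then show ?thesis unfolding reach_def by (intro exI[of _ "t1 + t2"]) (simp add: run_add)
qed
lemma reach_mono: "reach s s' k \<Longrightarrow> k \<le> k' \<Longrightarrow> reach s s' k'"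
  unfolding reach_def using le_trans by blast

definition inreg :: "int \<Rightarrow> int \<Rightarrow> bool" where
  "inreg base x \<longleftrightarrow> x \<le> base \<and> (x mod 4 = base mod 4 \<or> x mod 4 = (base - 1) mod 4)"

lemma inreg_a: "k \<ge> 0 \<Longrightarrow> inreg base (base - 4 * k)"
proof -
  assume "k \<ge> 0"
  have "base - 4 * k = base + 4 * (- k)" by simp
  then have "(base - 4 * k) mod 4 = base mod 4" using mod_mult_self2[of base 4 "- k"] by simp
  then show ?thesis using \<open>k \<ge> 0\<close> unfolding inreg_def by simp
qed
lemma inreg_b: "k \<ge> 0 \<Longrightarrow> inreg base (base - 4 * k - 1)"
proof -
  assume "k \<ge> 0"
  have "base - 4 * k - 1 = (base - 1) + 4 * (- k)" by simp
  then have "(base - 4 * k - 1) mod 4 = (base - 1) mod 4" using mod_mult_self2[of "base - 1" 4 "- k"]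
    by (metis diff_diff_eq2 diff_minus_eq_add)
  then show ?thesis using \<open>k \<ge> 0\<close> unfolding inreg_def by simp
qed

definition stk_top :: "int \<Rightarrow> (nat \<Rightarrow> real) \<Rightarrow> (nat \<Rightarrow> real) \<Rightarrow> nat list list \<Rightarrow> (int \<Rightarrow> int) \<Rightarrow> (int \<Rightarrow> real) \<Rightarrow> bool" where
  "stk_top t pf wt st mi mr \<longleftrightarrow> (\<forall>j<length st. mi (t + 4 * int j - 1) = int (length (concat (drop j st)))
      \<and> mr (t + 4 * int j) = Ps pf (st ! j) \<and> mr (t + 4 * int j - 1) = Ps wt (st ! j))"

lemma stk_top_push:
  assumes "stk_top t pf wt st mi mr"
  shows "stk_top (t - 4) pf wt ([i] # st) (mi(t - 5 := int (length (concat st)) + 1))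
           (mr(t - 4 := pf i, t - 5 := wt i))"
  unfolding stk_top_def
proof (intro allI impI)
  fix j assume j: "j < length ([i] # st)"
  show "(mi(t - 5 := int (length (concat st)) + 1)) (t - 4 + 4 * int j - 1) = int (length (concat (drop j ([i] # st)))) \<and>
        (mr(t - 4 := pf i, t - 5 := wt i)) (t - 4 + 4 * int j) = Ps pf (([i] # st) ! j) \<and>
        (mr(t - 4 := pf i, t - 5 := wt i)) (t - 4 + 4 * int j - 1) = Ps wt (([i] # st) ! j)"
  proof (cases j)
    case 0
    then show ?thesis by simp
  next
    case (Suc j')
    then have "j' < length st" using j by simp
    then show ?thesis using assms Suc unfolding stk_top_def by (simp add: algebra_simps)
  qed
qed

lemma stk_top_merge:
  assumes "stk_top t pf wt (b1 # b2 # rest) mi mr"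
  shows "stk_top (t + 4) pf wt ((b2 @ b1) # rest) (mi(t + 3 := int (length (concat (b1 # b2 # rest)))))
           (mr(t + 4 := mr (t + 4) + mr t, t + 3 := mr (t + 3) + mr (t - 1)))"
  unfolding stk_top_def
proof (intro allI impI)
  fix j assume j: "j < length ((b2 @ b1) # rest)"
  have h0: "mr t = Ps pf b1" "mr (t - 1) = Ps wt b1"
    using assms[unfolded stk_top_def, rule_format, of 0] by simp_all
  have h1: "mr (t + 4) = Ps pf b2" "mr (t + 3) = Ps wt b2"
    using assms[unfolded stk_top_def, rule_format, of 1] by (simp_all add: algebra_simps)
  show "(mi(t + 3 := int (length (concat (b1 # b2 # rest))))) (t + 4 + 4 * int j - 1) = int (length (concat (drop j ((b2 @ b1) # rest)))) \<and>
        (mr(t + 4 := mr (t + 4) + mr t, t + 3 := mr (t + 3) + mr (t - 1))) (t + 4 + 4 * int j) = Ps pf (((b2 @ b1) # rest) ! j) \<and>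
        (mr(t + 4 := mr (t + 4) + mr t, t + 3 := mr (t + 3) + mr (t - 1))) (t + 4 + 4 * int j - 1) = Ps wt (((b2 @ b1) # rest) ! j)"
  proof (cases j)
    case 0
    then show ?thesis using h0 h1 by simp
  next
    case (Suc j')
    then have "Suc (Suc j') < length (b1 # b2 # rest)" using j by simp
    from assms[unfolded stk_top_def, rule_format, OF this] Suc
    show ?thesis by (simp add: algebra_simps)
  qed
qed

lemma length_concat_mergeTop: "length (concat (mergeTop pf wt st)) = length (concat st)"
  by (induction pf wt st rule: mergeTop.induct) auto

lemma length_mergeTop_le: "length (mergeTop pf wt st) \<le> length st"
proof (induction pf wt st rule: mergeTop.induct)
  case (1 pf wt b1 b2 rest)
  then show ?case by (cases "Ps wt b2 * Ps pf b1 \<le> Ps wt b1 * Ps pf b2") simp_all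
qed simp_all

lemma mergeTop_ne: "st \<noteq> [] \<Longrightarrow> mergeTop pf wt st \<noteq> []"
  by (induction pf wt st rule: mergeTop.induct) auto

lemma length_concat_decomp: "length (concat (decomp pf wt i)) = i"
  by (induction i) (auto simp: length_concat_mergeTop)

lemma length_decomp_le: "length (decomp pf wt i) \<le> i"
proof (induction i)
  case (Suc i)
  have "length (decomp pf wt (Suc i)) \<le> length ([i] # decomp pf wt i)"
    using length_mergeTop_le[of pf wt "[i] # decomp pf wt i"] by simp
  then show ?case using Suc by simp
qed simp

definition scratch :: "nat set" where "scratch = {3, 6, 7, 9, 10, 23}"

definition Dctx :: "state \<Rightarrow> nat \<Rightarrow> int \<Rightarrow> int \<Rightarrow> (nat \<Rightarrow> real) \<Rightarrow> (nat \<Rightarrow> real) \<Rightarrow> bool" where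
  "Dctx s0 len off base pf wt \<longleftrightarrow> ireg s0 1 = 1 \<and> ireg s0 2 = 4 \<and> ireg s0 4 = int len \<and> ireg s0 5 = off
     \<and> ireg s0 12 = base \<and> 0 \<le> off \<and> base \<le> -4
     \<and> (\<forall>j<len. rmem s0 (2 * (off + int j)) = pf j \<and> rmem s0 (2 * (off + int j) + 1) = wt j)"

definition Dcommon :: "state \<Rightarrow> int \<Rightarrow> (nat \<Rightarrow> real) \<Rightarrow> (nat \<Rightarrow> real) \<Rightarrow> nat list list \<Rightarrow> state \<Rightarrow> bool" where
  "Dcommon s0 base pf wt st s \<longleftrightarrow> ireg s 7 = int (length st) \<and> ireg s 6 = base + 4 - 4 * int (length st)
     \<and> (\<forall>r. r \<notin> scratch \<longrightarrow> ireg s r = ireg s0 r)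
     \<and> stk_top (ireg s 6) pf wt st (imem s) (rmem s)
     \<and> (\<forall>x. \<not> inreg base x \<longrightarrow> imem s x = imem s0 x \<and> rmem s x = rmem s0 x)"

definition DL :: "state \<Rightarrow> nat \<Rightarrow> int \<Rightarrow> (nat \<Rightarrow> real) \<Rightarrow> (nat \<Rightarrow> real) \<Rightarrow> nat \<Rightarrow> state \<Rightarrow> bool" where
  "DL s0 len base pf wt i s \<longleftrightarrow> pc s = 63 \<and> i \<le> len \<and> ireg s 3 = int i
     \<and> Dcommon s0 base pf wt (decomp pf wt i) s"

definition DI :: "state \<Rightarrow> nat \<Rightarrow> int \<Rightarrow> (nat \<Rightarrow> real) \<Rightarrow> (nat \<Rightarrow> real) \<Rightarrow> nat \<Rightarrow> nat list list \<Rightarrow> state \<Rightarrow> bool" where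
  "DI s0 len base pf wt i st s \<longleftrightarrow> pc s = 76 \<and> i \<le> len \<and> ireg s 3 = int i \<and> st \<noteq> []
     \<and> length (concat st) = i \<and> mergeTop pf wt st = decomp pf wt i
     \<and> Dcommon s0 base pf wt st s"


lemma Dcommon_pc[simp]: "Dcommon s0 base pf wt st (s\<lparr>pc := n\<rparr>) = Dcommon s0 base pf wt st s"
  by (simp add: Dcommon_def)

lemma inner_loop:
  assumes ctx: "Dctx s0 len off base pf wt"
  shows "DI s0 len base pf wt i st s \<Longrightarrow>
    \<exists>s'. reach s s' (19 * (length st - length (decomp pf wt i)) + 12) \<and> DL s0 len base pf wt i s'"
proof (induction "length st" arbitrary: st s rule: less_induct)
  case less
  note DI = less.prems[unfolded DI_def Dcommon_def]
  have c1: "ireg s0 1 = 1" "ireg s0 2 = 4" using ctx by (auto simp: Dctx_def)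
  have D: "pc s = 76" "i \<le> len" "ireg s 3 = int i" "st \<noteq> []" "length (concat st) = i"
     "mergeTop pf wt st = decomp pf wt i" "ireg s 7 = int (length st)" "ireg s 6 = base + 4 - 4 * int (length st)"
    using DI by simp_all
  have fr: "\<forall>r. r \<notin> scratch \<longrightarrow> ireg s r = ireg s0 r" using DI by simp
  have mf: "\<forall>x. \<not> inreg base x \<longrightarrow> imem s x = imem s0 x \<and> rmem s x = rmem s0 x" using DI by simp
  have r1: "ireg s 1 = 1" "ireg s 2 = 4" using fr c1 by (auto simp: scratch_def)
  define t where "t = ireg s 6"
  define h where "h = ireg s 7"
  have ht: "h = int (length st)" "t = base + 4 - 4 * int (length st)" using D unfolding t_def h_def by auto
  consider (one) b where "st = [b]" | (two) b1 b2 rest where "st = b1 # b2 # rest"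
    using D(4) by (metis list.exhaust)
  then show ?case
  proof cases
    case one
    have s1: "run prog 1 s = s\<lparr>pc := 63\<rparr>"
      using seg_inner_exit1[of s h] D r1 ht one h_def by simp
    have d: "decomp pf wt i = [b]" using less.prems one by (simp add: DI_def)
    have "DL s0 len base pf wt i (s\<lparr>pc := 63\<rparr>)"
      using less.prems one unfolding DL_def DI_def d by simp
    moreover have "reach s (s\<lparr>pc := 63\<rparr>) (19 * (length st - length (decomp pf wt i)) + 12)"
      using reach_mono[OF reach_run[of s 1]] s1 by simp
    ultimately show ?thesis by blast
  next
    case two
    have stk0: "stk_top (ireg s 6) pf wt st (imem s) (rmem s)" using DI[THEN conjunct2, THEN conjunct2, THEN conjunct2, THEN conjunct2, THEN conjunct2, THEN conjunct2,
      THEN conjunct2, THEN conjunct2, THEN conjunct2, THEN conjunct1] .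
    have stk: "stk_top t pf wt st (imem s) (rmem s)" using stk0 t_def by simp
    have m0: "rmem s t = Ps pf b1" "rmem s (t - 1) = Ps wt b1"
      using stk[unfolded stk_top_def, rule_format, of 0] two by simp_all
    have m1: "rmem s (t + 4) = Ps pf b2" "rmem s (t + 3) = Ps wt b2"
      using stk[unfolded stk_top_def, rule_format, of 1] two by (simp_all add: algebra_simps)
    have hgt: "h > 1" using ht two by simp
    show ?thesis
    proof (cases "Ps wt b2 * Ps pf b1 \<le> Ps wt b1 * Ps pf b2")
      case True
      let ?st' = "(b2 @ b1) # rest"
      define s1 where "s1 = run prog 19 s"
      have cnd: "rmem s (t + 3) * rmem s t \<le> rmem s (t - 1) * rmem s (t + 4)" using True m0 m1 by simp
      note sm = seg_merge[of s i t h, OF D(1) r1 D(3) t_def[symmetric] h_def[symmetric] hgt cnd, folded s1_def]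
      have mt: "mergeTop pf wt ?st' = decomp pf wt i" using D two True by simp
      have k: "int (length st) - 2 \<ge> 0" using two by simp
      have e: "t + 4 = base - 4 * (int (length st) - 2)" "t + 3 = base - 4 * (int (length st) - 2) - 1"
        using ht(2) by simp_all
      have ir: "inreg base (t + 4)" "inreg base (t + 3)"
        unfolding e by (rule inreg_a[OF k], rule inreg_b[OF k])
      have "DI s0 len base pf wt i ?st' s1"
        unfolding DI_def Dcommon_def
      proof (intro conjI allI impI)
        show "pc s1 = 76" using sm D by simp
        show "i \<le> len" "?st' \<noteq> []" using D by auto
        show "ireg s1 3 = int i" using sm D by simp
        show "length (concat ?st') = i" using D two by simp
        show "mergeTop pf wt ?st' = decomp pf wt i" using mt .
        show "ireg s1 7 = int (length ?st')" using sm D ht two h_def by simp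
        show "ireg s1 6 = base + 4 - 4 * int (length ?st')" using sm D ht two t_def by simp
        fix r assume "r \<notin> scratch"
        then show "ireg s1 r = ireg s0 r" using sm fr \<open>r \<notin> scratch\<close> by (simp add: scratch_def)
      next
        have li: "int (length (concat (b1 # b2 # rest))) = int i" using D(5) two by simp
        have "stk_top (t + 4) pf wt ?st' (imem s1) (rmem s1)"
          using stk_top_merge[of t pf wt b1 b2 rest "imem s" "rmem s", unfolded li] stk two sm by simp
        then show "stk_top (ireg s1 6) pf wt ?st' (imem s1) (rmem s1)" using sm D by simp
      next
        fix x assume "\<not> inreg base x"
        then have "x \<noteq> t + 4" "x \<noteq> t + 3" using ir by auto
        then show "imem s1 x = imem s0 x" "rmem s1 x = rmem s0 x" using sm mf \<open>\<not> inreg base x\<close> by auto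
      qed
      from less.hyps[OF _ this] two obtain s' where
        s': "reach s1 s' (19 * (length ?st' - length (decomp pf wt i)) + 12)" "DL s0 len base pf wt i s'"
        by auto
      have L: "length (decomp pf wt i) \<le> length ?st'" using mt length_mergeTop_le by metis
      have "reach s s' (19 + (19 * (length ?st' - length (decomp pf wt i)) + 12))"
        using reach_trans[OF reach_run[of s 19, folded s1_def] s'(1)] .
      moreover have "19 + (19 * (length ?st' - length (decomp pf wt i)) + 12) = 19 * (length st - length (decomp pf wt i)) + 12"
        using L two by simp
      ultimately show ?thesis using s'(2) by metis
    next
      case False
      define s1 where "s1 = run prog 12 s"
      have cnd: "\<not> rmem s (t + 3) * rmem s t \<le> rmem s (t - 1) * rmem s (t + 4)" using False m0 m1 by simp
      note sm = seg_inner_exit2[of s t h, OF D(1) r1 t_def[symmetric] h_def[symmetric] hgt cnd, folded s1_def]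
      have mt: "decomp pf wt i = st" using D two False by simp
      have "DL s0 len base pf wt i s1"
        unfolding DL_def Dcommon_def mt
      proof (intro conjI allI impI)
        show "pc s1 = 63" using sm D by simp
        show "i \<le> len" using D by auto
        show "ireg s1 3 = int i" using sm D by simp
        show "ireg s1 7 = int (length st)" using sm D by simp
        show "ireg s1 6 = base + 4 - 4 * int (length st)" using sm D by simp
        fix r assume "r \<notin> scratch"
        then show "ireg s1 r = ireg s0 r" using sm fr \<open>r \<notin> scratch\<close> by (simp add: scratch_def)
      next
        show "stk_top (ireg s1 6) pf wt st (imem s1) (rmem s1)" using sm stk t_def by simp
      next
        fix x assume "\<not> inreg base x"
        then show "imem s1 x = imem s0 x" "rmem s1 x = rmem s0 x" using sm mf by auto
      qed
      then show ?thesis using reach_mono[OF reach_run[of s 12, folded s1_def]] by (metis le_add2)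
    qed
  qed
qed


lemma outer_loop:
  assumes ctx: "Dctx s0 len off base pf wt"
  shows "DL s0 len base pf wt i s \<Longrightarrow>
    \<exists>s'. reach s s' (44 * (len - i) + 19 * length (decomp pf wt i) + 1) \<and> pc s' = 96
       \<and> Dcommon s0 base pf wt (decomp pf wt len) s'"
proof (induction "len - i" arbitrary: i s)
  case 0
  note DL = "0.prems"[unfolded DL_def]
  have D: "pc s = 63" "i \<le> len" "ireg s 3 = int i" using DL by simp_all
  have c: "ireg s0 4 = int len" using ctx by (simp add: Dctx_def)
  have fr: "\<forall>r. r \<notin> scratch \<longrightarrow> ireg s r = ireg s0 r" using DL by (simp add: Dcommon_def)
  have r4: "ireg s 4 = int len" using fr c by (simp add: scratch_def)
  have il: "i = len" using D "0.hyps" by simp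
  have s1: "run prog 1 s = s\<lparr>pc := 96\<rparr>" using seg_done[OF D(1) D(3) r4] il by simp
  have "reach s (s\<lparr>pc := 96\<rparr>) (44 * (len - i) + 19 * length (decomp pf wt i) + 1)"
    using reach_mono[OF reach_run[of s 1]] s1 by simp
  moreover have "Dcommon s0 base pf wt (decomp pf wt len) (s\<lparr>pc := 96\<rparr>)" using DL il by simp
  ultimately show ?case by auto
next
  case (Suc k)
  note DL = Suc.prems[unfolded DL_def Dcommon_def]
  have c: "ireg s0 1 = 1" "ireg s0 2 = 4" "ireg s0 4 = int len" "ireg s0 5 = off"
     "\<forall>j<len. rmem s0 (2 * (off + int j)) = pf j \<and> rmem s0 (2 * (off + int j) + 1) = wt j"
     "0 \<le> off" "base \<le> -4"
    using ctx by (simp_all add: Dctx_def)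
  let ?st = "decomp pf wt i"
  have D: "pc s = 63" "i \<le> len" "ireg s 3 = int i"
     "ireg s 7 = int (length ?st)" "ireg s 6 = base + 4 - 4 * int (length ?st)"
    using DL by simp_all
  have fr: "\<forall>r. r \<notin> scratch \<longrightarrow> ireg s r = ireg s0 r" using DL by simp
  have mf: "\<forall>x. \<not> inreg base x \<longrightarrow> imem s x = imem s0 x \<and> rmem s x = rmem s0 x" using DL by simp
  have stk: "stk_top (ireg s 6) pf wt ?st (imem s) (rmem s)"
    using DL[THEN conjunct2, THEN conjunct2, THEN conjunct2, THEN conjunct2, THEN conjunct2,
      THEN conjunct2, THEN conjunct1] .
  have r: "ireg s 1 = 1" "ireg s 2 = 4" "ireg s 4 = int len" "ireg s 5 = off"
    using fr c by (simp_all add: scratch_def)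
  have il: "i < len" using Suc.hyps(2) by simp
  define t where "t = ireg s 6"
  define s1 where "s1 = run prog 13 s"
  note sp = seg_push[OF D(1) r(1,2) D(3) r(3,4) t_def[symmetric] D(4) il, folded s1_def]
  have nr: "\<not> inreg base (2 * (off + int i))" "\<not> inreg base (2 * (off + int i) + 1)"
    using c(6,7) by (auto simp: inreg_def)
  have pw: "rmem s (2 * (off + int i)) = pf i" "rmem s (2 * (off + int i) + 1) = wt i"
    using mf[rule_format, OF nr(1)] mf[rule_format, OF nr(2)] c(5)[rule_format, OF il] by simp_all
  have lc: "length (concat ?st) = i" by (rule length_concat_decomp)
  have k: "int (length ?st) \<ge> 0" by simp
  have e: "t - 4 = base - 4 * int (length ?st)" "t - 5 = base - 4 * int (length ?st) - 1"
    using D(5) t_def by simp_all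
  have ir: "inreg base (t - 4)" "inreg base (t - 5)"
    unfolding e by (rule inreg_a[OF k], rule inreg_b[OF k])
  have DI1: "DI s0 len base pf wt (Suc i) ([i] # ?st) s1"
    unfolding DI_def Dcommon_def
  proof (intro conjI allI impI)
    show "pc s1 = 76" using sp by simp
    show "Suc i \<le> len" using il by simp
    show "ireg s1 3 = int (Suc i)" using sp by simp
    show "[i] # ?st \<noteq> []" by simp
    show "length (concat ([i] # ?st)) = Suc i" using lc by simp
    show "mergeTop pf wt ([i] # ?st) = decomp pf wt (Suc i)" by simp
    show "ireg s1 7 = int (length ([i] # ?st))" using sp D by simp
    show "ireg s1 6 = base + 4 - 4 * int (length ([i] # ?st))" using sp D t_def by simp
    fix r assume "r \<notin> scratch"
    then show "ireg s1 r = ireg s0 r" using sp fr by (simp add: scratch_def)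
  next
    have "stk_top (t - 4) pf wt ([i] # ?st) (imem s1) (rmem s1)"
      using stk_top_push[of t pf wt ?st "imem s" "rmem s" i, unfolded lc] stk t_def sp pw by simp
    then show "stk_top (ireg s1 6) pf wt ([i] # ?st) (imem s1) (rmem s1)" using sp by simp
  next
    fix x assume "\<not> inreg base x"
    then have "x \<noteq> t - 4" "x \<noteq> t - 5" using ir by auto
    then show "imem s1 x = imem s0 x" "rmem s1 x = rmem s0 x" using sp mf \<open>\<not> inreg base x\<close> by auto
  qed
  from inner_loop[OF ctx DI1] obtain s2 where
    s2: "reach s1 s2 (19 * (length ([i] # ?st) - length (decomp pf wt (Suc i))) + 12)"
        "DL s0 len base pf wt (Suc i) s2" by blast
  have kk: "k = len - Suc i" using Suc.hyps(2) by simp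
  from Suc.hyps(1)[OF kk s2(2)] obtain s3 where
    s3: "reach s2 s3 (44 * (len - Suc i) + 19 * length (decomp pf wt (Suc i)) + 1)" "pc s3 = 96"
        "Dcommon s0 base pf wt (decomp pf wt len) s3" by blast
  have L: "length (decomp pf wt (Suc i)) \<le> length ([i] # ?st)"
    using length_mergeTop_le[of pf wt "[i] # ?st"] by simp
  have "reach s s3 (13 + (19 * (length ([i] # ?st) - length (decomp pf wt (Suc i))) + 12)
        + (44 * (len - Suc i) + 19 * length (decomp pf wt (Suc i)) + 1))"
    using reach_trans[OF reach_trans[OF reach_run[of s 13, folded s1_def] s2(1)] s3(1)] .
  moreover have "13 + (19 * (length ([i] # ?st) - length (decomp pf wt (Suc i))) + 12)
        + (44 * (len - Suc i) + 19 * length (decomp pf wt (Suc i)) + 1)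
       = 44 * (len - i) + 19 * length ?st + 1"
    using L il by simp
  ultimately show ?case using s3 by metis
qed

lemma D_run:
  assumes ctx: "Dctx s0 len off base pf wt" and p0: "pc s0 = 60"
  shows "\<exists>s'. reach s0 s' (44 * len + 4) \<and> pc s' = 96 \<and> Dcommon s0 base pf wt (decomp pf wt len) s'"
proof -
  have c: "ireg s0 2 = 4" "ireg s0 12 = base" using ctx by (simp_all add: Dctx_def)
  define s1 where "s1 = run prog 3 s0"
  note se = seg_entry[OF p0 c, folded s1_def]
  have "DL s0 len base pf wt 0 s1"
    unfolding DL_def Dcommon_def using se by (simp add: scratch_def stk_top_def)
  from outer_loop[OF ctx this] obtain s' where
    "reach s1 s' (44 * len + 1)" "pc s' = 96" "Dcommon s0 base pf wt (decomp pf wt len) s'" by auto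
  moreover have "reach s0 s' (3 + (44 * len + 1))"
    using reach_trans[OF reach_run[of s0 3, folded s1_def] calculation(1)] .
  moreover have "3 + (44 * len + 1) = 44 * len + 4" by simp
  ultimately show ?thesis by metis
qed


definition pfc :: "job_data list \<Rightarrow> nat \<Rightarrow> real" where
  "pfc c j = (if j < length c then fst (c ! j) else 1)"
definition wtc :: "job_data list \<Rightarrow> nat \<Rightarrow> real" where
  "wtc c j = snd (c ! j)"
definition pl :: "job_data list \<Rightarrow> job_data list \<Rightarrow> nat + nat \<Rightarrow> real" where
  "pl c1 c2 x = (case x of Inl j \<Rightarrow> pfc c1 j | Inr j \<Rightarrow> pfc c2 j)"
definition BLc :: "job_data list \<Rightarrow> nat list list" where
  "BLc c = rev (decomp (pfc c) (wtc c) (length c))"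
definition BA :: "job_data list \<Rightarrow> (nat + nat) list list" where
  "BA c1 = map (map Inl) (BLc c1)"
definition BB :: "job_data list \<Rightarrow> (nat + nat) list list" where
  "BB c2 = map (map Inr) (BLc c2)"
definition MM :: "job_data list \<Rightarrow> job_data list \<Rightarrow> (nat + nat) list" where
  "MM c1 c2 = mrg (pl c1 c2) (weight c1 c2) (BA c1) (BB c2)"

fun tag :: "nat + nat \<Rightarrow> int" where "tag (Inl _) = 0" | "tag (Inr _) = 1"
fun idx :: "nat + nat \<Rightarrow> nat" where "idx (Inl j) = j" | "idx (Inr j) = j"

definition outok :: "(nat + nat) list \<Rightarrow> nat \<Rightarrow> (int \<Rightarrow> int) \<Rightarrow> bool" where
  "outok M n mi \<longleftrightarrow> (\<forall>k<n. mi (2 + 2 * int k) = tag (M ! k) \<and> mi (3 + 2 * int k) = int (idx (M ! k)))"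

definition stk_bot :: "int \<Rightarrow> (nat \<Rightarrow> real) \<Rightarrow> (nat \<Rightarrow> real) \<Rightarrow> nat list list \<Rightarrow> (int \<Rightarrow> int) \<Rightarrow> (int \<Rightarrow> real) \<Rightarrow> bool" where
  "stk_bot base pf wt Binv mi mr \<longleftrightarrow> (\<forall>k<length Binv. mi (base - 4 * int k - 1) = int (length (concat (take (Suc k) Binv)))
     \<and> mr (base - 4 * int k) = Ps pf (Binv ! k) \<and> mr (base - 4 * int k - 1) = Ps wt (Binv ! k))"

lemma stk_top_bot:
  assumes "stk_top (base + 4 - 4 * int (length st)) pf wt st mi mr"
  shows "stk_bot base pf wt (rev st) mi mr"
  unfolding stk_bot_def
proof (intro allI impI)
  fix k assume k: "k < length (rev st)"
  define j where "j = length st - 1 - k"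
  have j: "j < length st" using k j_def by simp
  have a: "base + 4 - 4 * int (length st) + 4 * int j = base - 4 * int k" using k j_def by (simp add: of_nat_diff)
  have r: "rev st ! k = st ! j" using k j_def by (simp add: rev_nth)
  have "take (Suc k) (rev st) = rev (drop j st)" using k j_def by (simp add: take_rev)
  then have l: "length (concat (take (Suc k) (rev st))) = length (concat (drop j st))"
    by (simp add: length_concat rev_map[symmetric] sum_list_rev)
  show "mi (base - 4 * int k - 1) = int (length (concat (take (Suc k) (rev st)))) \<and>
        mr (base - 4 * int k) = Ps pf (rev st ! k) \<and> mr (base - 4 * int k - 1) = Ps wt (rev st ! k)"
    using assms[unfolded stk_top_def, rule_format, OF j] unfolding a r l by simp
qed

lemma stk_bot_upd:
  assumes "stk_bot base pf wt Binv mi mr" "base \<le> -4" "o1 \<ge> 0" "o2 \<ge> 0"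
  shows "stk_bot base pf wt Binv (mi(o1 := v1, o2 := v2)) mr"
  using assms unfolding stk_bot_def by auto

lemma stk_bot_frame:
  assumes "stk_bot base pf wt Binv mi mr" "\<forall>k. imem s (base - 4 * int k - 1) = mi (base - 4 * int k - 1)
     \<and> rmem s (base - 4 * int k) = mr (base - 4 * int k) \<and> rmem s (base - 4 * int k - 1) = mr (base - 4 * int k - 1)"
  shows "stk_bot base pf wt Binv (imem s) (rmem s)"
  using assms unfolding stk_bot_def by auto

lemma not_inreg6:
  "\<not> inreg (-6) (-4 - 4 * int k)" "\<not> inreg (-6) (-4 - 4 * int k - 1)"
proof -
  have "(-4 - 4 * int k) mod 4 = 0" using mod_mult_self2[of 0 4 "-1 - int k"] by (simp add: algebra_simps)
  then show "\<not> inreg (-6) (-4 - 4 * int k)" by (simp add: inreg_def)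
  have "(-4 - 4 * int k - 1) mod 4 = 3" using mod_mult_self2[of 3 4 "-2 - int k"] by (simp add: algebra_simps)
  then show "\<not> inreg (-6) (-4 - 4 * int k - 1)" by (simp add: inreg_def)
qed

lemma block_range:
  assumes "concat bl = [0..<n]" "k < length bl"
  shows "bl ! k = [length (concat (take k bl)) ..< length (concat (take (Suc k) bl))]"
proof -
  have "bl = take k bl @ bl ! k # drop (Suc k) bl" using id_take_nth_drop[OF assms(2)] .
  then have e: "[0..<n] = concat (take k bl) @ bl ! k @ concat (drop (Suc k) bl)"
    using assms(1) by (metis concat.simps(2) concat_append)
  define X where "X = concat (take k bl)"
  have "take (length X + length (bl ! k)) [0..<n] = X @ bl ! k" using e unfolding X_def
    by (metis append.assoc append_eq_conv_conj length_append)
  moreover have "drop (length X) (take (length X + length (bl ! k)) [0..<n]) = bl ! k"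
    using calculation by simp
  moreover have "length X + length (bl ! k) \<le> n" using e unfolding X_def
    by (metis le_add1 length_append length_upt minus_nat.diff_0 add.assoc)
  ultimately have "bl ! k = [length X ..< length X + length (bl ! k)]"
    by (metis drop_take take_upt drop_upt add_0 min.absorb1 le_add1 add_diff_cancel_left' min_def)
  moreover have "length (concat (take (Suc k) bl)) = length X + length (bl ! k)"
    using assms(2) unfolding X_def by (simp add: take_Suc_conv_app_nth)
  ultimately show ?thesis unfolding X_def by simp
qed

lemma drop_block: "drop n M = B @ R \<Longrightarrow> drop (n + length B) M = R"
  by (metis append_eq_conv_conj drop_drop add.commute)

lemma nth_block: "drop n M = B @ R \<Longrightarrow> i < length B \<Longrightarrow> M ! (n + i) = B ! i"
proof -
  assume a: "drop n M = B @ R" "i < length B"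
  then have "n \<le> length M" by (metis drop_eq_Nil2 Nil_is_append_conv length_0_conv not_less0 nle_le)
  then show ?thesis using a by (metis nth_append nth_drop)
qed

lemma outok_ext:
  assumes "outok M n mi" "M ! n = x"
  shows "outok M (Suc n) (mi(2 + 2 * int n := tag x, 2 + 2 * int n + 1 := int (idx x)))"
  using assms unfolding outok_def by (auto simp: less_Suc_eq)


lemma pfc_pos: assumes "valid_instance c1 c2" shows "\<forall>j. pfc c1 j > 0" "\<forall>j. pfc c2 j > 0"
proof -
  have h: "\<forall>x\<in>set (c1 @ c2). fst x > 0" using assms unfolding valid_instance_def by (auto simp: case_prod_beta)
  show "\<forall>j. pfc c1 j > 0" unfolding pfc_def using h by simp
  show "\<forall>j. pfc c2 j > 0" unfolding pfc_def using h by simp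
qed

lemma BLc_concat: "\<forall>j. pfc c j > 0 \<Longrightarrow> concat (BLc c) = [0..<length c]"
  unfolding BLc_def using decomp_good(2) by blast

lemma BLc_good: "\<forall>j. pfc c j > 0 \<Longrightarrow> good (pfc c) (wtc c) (BLc c)"
  unfolding BLc_def using decomp_good(1) by blast

definition jx :: "job_data list \<Rightarrow> nat \<Rightarrow> nat" where
  "jx c k = length (concat (take k (BLc c)))"

lemma BLc_block: "\<forall>j. pfc c j > 0 \<Longrightarrow> k < length (BLc c) \<Longrightarrow> BLc c ! k = [jx c k ..< jx c (Suc k)]"
  unfolding jx_def using block_range[OF BLc_concat] by blast

lemma jx_mono: "jx c k \<le> jx c (Suc k)"
  unfolding jx_def by (cases "k < length (BLc c)") (auto simp: take_Suc_conv_app_nth)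

lemma jx_le: "\<forall>j. pfc c j > 0 \<Longrightarrow> jx c k \<le> length c"
proof -
  assume p: "\<forall>j. pfc c j > 0"
  have "length (concat (take k (BLc c))) \<le> length (concat (BLc c))"
    by (metis append_take_drop_id concat_append le_add1 length_append)
  then show ?thesis using BLc_concat[OF p] unfolding jx_def by simp
qed

lemma jx_all: "\<forall>j. pfc c j > 0 \<Longrightarrow> length (BLc c) \<le> k \<Longrightarrow> jx c k = length c"
  unfolding jx_def using BLc_concat by simp

definition MS :: "job_data list \<Rightarrow> job_data list \<Rightarrow> state \<Rightarrow> bool" where
  "MS c1 c2 s \<longleftrightarrow> ireg s 0 = 0 \<and> ireg s 1 = 1 \<and> ireg s 2 = 4 \<and> ireg s 11 = int (length (BLc c1))
     \<and> ireg s 21 = int (length (BLc c2))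
     \<and> stk_bot (-4) (pfc c1) (wtc c1) (BLc c1) (imem s) (rmem s)
     \<and> stk_bot (-6) (pfc c2) (wtc c2) (BLc c2) (imem s) (rmem s)"

definition Minv :: "job_data list \<Rightarrow> job_data list \<Rightarrow> nat \<Rightarrow> nat \<Rightarrow> state \<Rightarrow> bool" where
  "Minv c1 c2 ka kb s \<longleftrightarrow> MS c1 c2 s \<and> pc s = 21 \<and> ka \<le> length (BLc c1) \<and> kb \<le> length (BLc c2)
     \<and> ireg s 13 = int ka \<and> ireg s 14 = int kb \<and> ireg s 15 = -4 - 4 * int ka \<and> ireg s 16 = -6 - 4 * int kb
     \<and> ireg s 17 = int (jx c1 ka) \<and> ireg s 18 = int (jx c2 kb) \<and> ireg s 19 = 2 + 2 * int (jx c1 ka + jx c2 kb)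
     \<and> mrg (pl c1 c2) (weight c1 c2) (drop ka (BA c1)) (drop kb (BB c2)) = drop (jx c1 ka + jx c2 kb) (MM c1 c2)
     \<and> outok (MM c1 c2) (jx c1 ka + jx c2 kb) (imem s)"

definition Ainv :: "job_data list \<Rightarrow> job_data list \<Rightarrow> nat \<Rightarrow> nat \<Rightarrow> nat \<Rightarrow> state \<Rightarrow> bool" where
  "Ainv c1 c2 ka kb j s \<longleftrightarrow> MS c1 c2 s \<and> pc s = 37 \<and> ka < length (BLc c1) \<and> kb \<le> length (BLc c2)
     \<and> ireg s 13 = int ka \<and> ireg s 14 = int kb \<and> ireg s 15 = -4 - 4 * int ka \<and> ireg s 16 = -6 - 4 * int kb
     \<and> ireg s 17 = int j \<and> ireg s 18 = int (jx c2 kb) \<and> ireg s 19 = 2 + 2 * int (j + jx c2 kb)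
     \<and> ireg s 20 = int (jx c1 (Suc ka)) \<and> jx c1 ka \<le> j \<and> j \<le> jx c1 (Suc ka)
     \<and> drop (jx c1 ka + jx c2 kb) (MM c1 c2) = BA c1 ! ka @ mrg (pl c1 c2) (weight c1 c2) (drop (Suc ka) (BA c1)) (drop kb (BB c2))
     \<and> outok (MM c1 c2) (j + jx c2 kb) (imem s)"

definition Binv :: "job_data list \<Rightarrow> job_data list \<Rightarrow> nat \<Rightarrow> nat \<Rightarrow> nat \<Rightarrow> state \<Rightarrow> bool" where
  "Binv c1 c2 ka kb j s \<longleftrightarrow> MS c1 c2 s \<and> pc s = 49 \<and> ka \<le> length (BLc c1) \<and> kb < length (BLc c2)
     \<and> ireg s 13 = int ka \<and> ireg s 14 = int kb \<and> ireg s 15 = -4 - 4 * int ka \<and> ireg s 16 = -6 - 4 * int kb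
     \<and> ireg s 17 = int (jx c1 ka) \<and> ireg s 18 = int j \<and> ireg s 19 = 2 + 2 * int (jx c1 ka + j)
     \<and> ireg s 20 = int (jx c2 (Suc kb)) \<and> jx c2 kb \<le> j \<and> j \<le> jx c2 (Suc kb)
     \<and> drop (jx c1 ka + jx c2 kb) (MM c1 c2) = BB c2 ! kb @ mrg (pl c1 c2) (weight c1 c2) (drop ka (BA c1)) (drop (Suc kb) (BB c2))
     \<and> outok (MM c1 c2) (jx c1 ka + j) (imem s)"

lemma MS_upd: "MS c1 c2 s \<Longrightarrow> ireg s' 0 = ireg s 0 \<Longrightarrow> ireg s' 1 = ireg s 1 \<Longrightarrow> ireg s' 2 = ireg s 2
  \<Longrightarrow> ireg s' 11 = ireg s 11 \<Longrightarrow> ireg s' 21 = ireg s 21 \<Longrightarrow> rmem s' = rmem s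
  \<Longrightarrow> imem s' = (imem s)(o1 := v1, o2 := v2) \<Longrightarrow> o1 \<ge> 0 \<Longrightarrow> o2 \<ge> 0 \<Longrightarrow> MS c1 c2 s'"
  unfolding MS_def using stk_bot_upd[of "-4"] stk_bot_upd[of "-6"] by simp

lemma MS_same: "MS c1 c2 s \<Longrightarrow> ireg s' 0 = ireg s 0 \<Longrightarrow> ireg s' 1 = ireg s 1 \<Longrightarrow> ireg s' 2 = ireg s 2
  \<Longrightarrow> ireg s' 11 = ireg s 11 \<Longrightarrow> ireg s' 21 = ireg s 21 \<Longrightarrow> rmem s' = rmem s
  \<Longrightarrow> imem s' = imem s \<Longrightarrow> MS c1 c2 s'"
  unfolding MS_def by simp

lemma al_loop:
  assumes pos: "\<forall>j. pfc c1 j > 0"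
  shows "Ainv c1 c2 ka kb j s \<Longrightarrow> \<exists>s'. reach s s' (7 * (jx c1 (Suc ka) - j) + 4) \<and> Minv c1 c2 (Suc ka) kb s'"
proof (induction "jx c1 (Suc ka) - j" arbitrary: j s)
  case 0
  note A = "0.prems"[unfolded Ainv_def]
  have ms: "MS c1 c2 s" using A by blast
  have r: "ireg s 1 = 1" "ireg s 2 = 4" using ms by (simp_all add: MS_def)
  have A2: "pc s = 37" "ireg s 20 = int (jx c1 (Suc ka))" "ireg s 17 = int j" using A by simp_all
  have je: "j = jx c1 (Suc ka)" using A "0.hyps" by simp
  have le: "ireg s 20 \<le> ireg s 17" using A2 je by simp
  define s1 where "s1 = run prog 4 s"
  note sg = seg_aexit[OF A2(1) le r, folded s1_def]
  have blk: "BA c1 ! ka = map Inl [jx c1 ka ..< jx c1 (Suc ka)]"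
    using BLc_block[OF pos] A by (simp add: BA_def)
  have dr: "drop (jx c1 (Suc ka) + jx c2 kb) (MM c1 c2) = mrg (pl c1 c2) (weight c1 c2) (drop (Suc ka) (BA c1)) (drop kb (BB c2))"
    using drop_block[OF A[THEN conjunct2, THEN conjunct2, THEN conjunct2, THEN conjunct2, THEN conjunct2,
      THEN conjunct2, THEN conjunct2, THEN conjunct2, THEN conjunct2, THEN conjunct2, THEN conjunct2,
      THEN conjunct2, THEN conjunct2, THEN conjunct2, THEN conjunct1]] blk A
    by (simp add: jx_mono add.commute)
  have "Minv c1 c2 (Suc ka) kb s1"
    unfolding Minv_def
  proof (intro conjI)
    show "MS c1 c2 s1" using MS_same[OF ms] sg by simp
  qed (use sg A je dr in simp_all)
  moreover have "reach s s1 (7 * (jx c1 (Suc ka) - j) + 4)" using reach_mono[OF reach_run[of s 4]] s1_def by simp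
  ultimately show ?case by blast
next
  case (Suc d)
  note A = Suc.prems[unfolded Ainv_def]
  have ms: "MS c1 c2 s" using A by blast
  have r: "ireg s 0 = 0" "ireg s 1 = 1" "ireg s 2 = 4" using ms by (simp_all add: MS_def)
  have A2: "pc s = 37" "ireg s 20 = int (jx c1 (Suc ka))" "ireg s 17 = int j"
    "ireg s 19 = 2 + 2 * int (j + jx c2 kb)" using A by simp_all
  have jl: "j < jx c1 (Suc ka)" using Suc.hyps(2) by simp
  have le: "\<not> ireg s 20 \<le> ireg s 17" using A2 jl by simp
  define s1 where "s1 = run prog 7 s"
  note sg = seg_aout[OF A2(1) le r(1,2), folded s1_def]
  have blk: "BA c1 ! ka = map Inl [jx c1 ka ..< jx c1 (Suc ka)]"
    using BLc_block[OF pos] A by (simp add: BA_def)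
  have drp: "drop (jx c1 ka + jx c2 kb) (MM c1 c2) = BA c1 ! ka @ mrg (pl c1 c2) (weight c1 c2) (drop (Suc ka) (BA c1)) (drop kb (BB c2))"
    using A by blast
  have nth: "MM c1 c2 ! (j + jx c2 kb) = Inl j"
  proof -
    have jj: "jx c1 ka \<le> j" using A by simp
    have i: "j - jx c1 ka < length (BA c1 ! ka)" using blk jl jj by simp
    have e1: "MM c1 c2 ! (jx c1 ka + jx c2 kb + (j - jx c1 ka)) = (BA c1 ! ka) ! (j - jx c1 ka)"
      by (rule nth_block[OF drp i])
    have e2: "jx c1 ka + jx c2 kb + (j - jx c1 ka) = j + jx c2 kb" using jj by simp
    have e3: "(BA c1 ! ka) ! (j - jx c1 ka) = Inl j" using blk jl jj by simp
    show ?thesis using e1 unfolding e2 e3 .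
  qed
  have ok: "outok (MM c1 c2) (Suc (j + jx c2 kb)) (imem s1)"
    using outok_ext[of "MM c1 c2" "j + jx c2 kb" "imem s" "Inl j"] A nth sg A2 by simp
  have "Ainv c1 c2 ka kb (Suc j) s1"
    unfolding Ainv_def
  proof (intro conjI)
    show "MS c1 c2 s1" using MS_upd[OF ms] sg A2 by simp
    show "outok (MM c1 c2) (Suc j + jx c2 kb) (imem s1)" using ok by simp
  qed (use sg A A2 jl drp in simp_all)
  moreover have dd: "d = jx c1 (Suc ka) - Suc j" using Suc.hyps(2) by simp
  ultimately obtain s' where
    s': "reach s1 s' (7 * (jx c1 (Suc ka) - Suc j) + 4)" "Minv c1 c2 (Suc ka) kb s'"
    using Suc.hyps(1) by blast
  have "reach s s' (7 + (7 * (jx c1 (Suc ka) - Suc j) + 4))"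
    using reach_trans[OF reach_run[of s 7, folded s1_def] s'(1)] .
  moreover have "7 + (7 * (jx c1 (Suc ka) - Suc j) + 4) = 7 * (jx c1 (Suc ka) - j) + 4" using jl by simp
  ultimately show ?case using s'(2) by metis
qed

lemma bl_loop:
  assumes pos: "\<forall>j. pfc c2 j > 0"
  shows "Binv c1 c2 ka kb j s \<Longrightarrow> \<exists>s'. reach s s' (7 * (jx c2 (Suc kb) - j) + 4) \<and> Minv c1 c2 ka (Suc kb) s'"
proof (induction "jx c2 (Suc kb) - j" arbitrary: j s)
  case 0
  note A = "0.prems"[unfolded Binv_def]
  have ms: "MS c1 c2 s" using A by blast
  have r: "ireg s 1 = 1" "ireg s 2 = 4" using ms by (simp_all add: MS_def)
  have A2: "pc s = 49" "ireg s 20 = int (jx c2 (Suc kb))" "ireg s 18 = int j" using A by simp_all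
  have je: "j = jx c2 (Suc kb)" using A "0.hyps" by simp
  have le: "ireg s 20 \<le> ireg s 18" using A2 je by simp
  define s1 where "s1 = run prog 4 s"
  note sg = seg_bexit[OF A2(1) le r, folded s1_def]
  have blk: "BB c2 ! kb = map Inr [jx c2 kb ..< jx c2 (Suc kb)]"
    using BLc_block[OF pos] A by (simp add: BB_def)
  have dr: "drop (jx c1 ka + jx c2 (Suc kb)) (MM c1 c2) = mrg (pl c1 c2) (weight c1 c2) (drop ka (BA c1)) (drop (Suc kb) (BB c2))"
    using drop_block[OF A[THEN conjunct2, THEN conjunct2, THEN conjunct2, THEN conjunct2, THEN conjunct2,
      THEN conjunct2, THEN conjunct2, THEN conjunct2, THEN conjunct2, THEN conjunct2, THEN conjunct2,
      THEN conjunct2, THEN conjunct2, THEN conjunct2, THEN conjunct1]] blk A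
    by (simp add: jx_mono add.commute)
  have "Minv c1 c2 ka (Suc kb) s1"
    unfolding Minv_def
  proof (intro conjI)
    show "MS c1 c2 s1" using MS_same[OF ms] sg by simp
  qed (use sg A je dr in simp_all)
  moreover have "reach s s1 (7 * (jx c2 (Suc kb) - j) + 4)" using reach_mono[OF reach_run[of s 4]] s1_def by simp
  ultimately show ?case by blast
next
  case (Suc d)
  note A = Suc.prems[unfolded Binv_def]
  have ms: "MS c1 c2 s" using A by blast
  have r: "ireg s 0 = 0" "ireg s 1 = 1" "ireg s 2 = 4" using ms by (simp_all add: MS_def)
  have A2: "pc s = 49" "ireg s 20 = int (jx c2 (Suc kb))" "ireg s 18 = int j"
    "ireg s 19 = 2 + 2 * int (jx c1 ka + j)" using A by simp_all
  have jl: "j < jx c2 (Suc kb)" using Suc.hyps(2) by simp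
  have le: "\<not> ireg s 20 \<le> ireg s 18" using A2 jl by simp
  define s1 where "s1 = run prog 7 s"
  note sg = seg_bout[OF A2(1) le r(2), folded s1_def]
  have blk: "BB c2 ! kb = map Inr [jx c2 kb ..< jx c2 (Suc kb)]"
    using BLc_block[OF pos] A by (simp add: BB_def)
  have drp: "drop (jx c1 ka + jx c2 kb) (MM c1 c2) = BB c2 ! kb @ mrg (pl c1 c2) (weight c1 c2) (drop ka (BA c1)) (drop (Suc kb) (BB c2))"
    using A by blast
  have nth: "MM c1 c2 ! (jx c1 ka + j) = Inr j"
  proof -
    have jj: "jx c2 kb \<le> j" using A by simp
    have i: "j - jx c2 kb < length (BB c2 ! kb)" using blk jl jj by simp
    have e1: "MM c1 c2 ! (jx c1 ka + jx c2 kb + (j - jx c2 kb)) = (BB c2 ! kb) ! (j - jx c2 kb)"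
      by (rule nth_block[OF drp i])
    have e2: "jx c1 ka + jx c2 kb + (j - jx c2 kb) = jx c1 ka + j" using jj by simp
    have e3: "(BB c2 ! kb) ! (j - jx c2 kb) = Inr j" using blk jl jj by simp
    show ?thesis using e1 unfolding e2 e3 .
  qed
  have ok: "outok (MM c1 c2) (Suc (jx c1 ka + j)) (imem s1)"
    using outok_ext[of "MM c1 c2" "jx c1 ka + j" "imem s" "Inr j"] A nth sg A2 r by simp
  have "Binv c1 c2 ka kb (Suc j) s1"
    unfolding Binv_def
  proof (intro conjI)
    show "MS c1 c2 s1" using MS_upd[OF ms] sg A2 by simp
    show "outok (MM c1 c2) (jx c1 ka + Suc j) (imem s1)" using ok by simp
  qed (use sg A A2 jl drp in simp_all)
  moreover have dd: "d = jx c2 (Suc kb) - Suc j" using Suc.hyps(2) by simp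
  ultimately obtain s' where
    s': "reach s1 s' (7 * (jx c2 (Suc kb) - Suc j) + 4)" "Minv c1 c2 ka (Suc kb) s'"
    using Suc.hyps(1) by blast
  have "reach s s' (7 + (7 * (jx c2 (Suc kb) - Suc j) + 4))"
    using reach_trans[OF reach_run[of s 7, folded s1_def] s'(1)] .
  moreover have "7 + (7 * (jx c2 (Suc kb) - Suc j) + 4) = 7 * (jx c2 (Suc kb) - j) + 4" using jl by simp
  ultimately show ?case using s'(2) by metis
qed



lemma mrg_Nil2: "mrg p w xs [] = concat xs"
  by (cases xs) auto

lemma len_BA: "length (BA c1) = length (BLc c1)" "length (BB c2) = length (BLc c2)"
  by (simp_all add: BA_def BB_def)

lemma wtc_eq: "wtc c = (\<lambda>j. snd (c ! j))" by (rule ext) (simp add: wtc_def)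

lemma Ps_BA: "k < length (BLc c1) \<Longrightarrow> Ps (pl c1 c2) (BA c1 ! k) = Ps (pfc c1) (BLc c1 ! k)"
  "k < length (BLc c1) \<Longrightarrow> Ps (weight c1 c2) (BA c1 ! k) = Ps (wtc c1) (BLc c1 ! k)"
  by (simp_all add: BA_def Ps_map comp_def pl_def wtc_eq)

lemma Ps_BB: "k < length (BLc c2) \<Longrightarrow> Ps (pl c1 c2) (BB c2 ! k) = Ps (pfc c2) (BLc c2 ! k)"
  "k < length (BLc c2) \<Longrightarrow> Ps (weight c1 c2) (BB c2 ! k) = Ps (wtc c2) (BLc c2 ! k)"
  by (simp_all add: BB_def Ps_map comp_def pl_def wtc_eq)

lemma MS_A: "MS c1 c2 s \<Longrightarrow> k < length (BLc c1) \<Longrightarrow>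
   imem s (-4 - 4 * int k - 1) = int (jx c1 (Suc k)) \<and> rmem s (-4 - 4 * int k) = Ps (pfc c1) (BLc c1 ! k)
   \<and> rmem s (-4 - 4 * int k - 1) = Ps (wtc c1) (BLc c1 ! k)"
  unfolding MS_def stk_bot_def jx_def by simp

lemma MS_B: "MS c1 c2 s \<Longrightarrow> k < length (BLc c2) \<Longrightarrow>
   imem s (-6 - 4 * int k - 1) = int (jx c2 (Suc k)) \<and> rmem s (-6 - 4 * int k) = Ps (pfc c2) (BLc c2 ! k)
   \<and> rmem s (-6 - 4 * int k - 1) = Ps (wtc c2) (BLc c2 ! k)"
  unfolding MS_def stk_bot_def jx_def by simp

lemma ml_loop:
  assumes pos1: "\<forall>j. pfc c1 j > 0" and pos2: "\<forall>j. pfc c2 j > 0"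
  shows "Minv c1 c2 ka kb s \<Longrightarrow> \<exists>s'. reach s s' (18 * ((length (BLc c1) - ka) + (length (BLc c2) - kb))
      + 7 * (length c1 + length c2 - (jx c1 ka + jx c2 kb)) + 2) \<and> pc s' = 59
      \<and> outok (MM c1 c2) (length c1 + length c2) (imem s')"
proof (induction "(length (BLc c1) - ka) + (length (BLc c2) - kb)" arbitrary: ka kb s rule: less_induct)
  case less
  let ?hA = "length (BLc c1)" and ?hB = "length (BLc c2)"
  let ?n = "length c1 + length c2"
  let ?B = "\<lambda>ka kb. 18 * ((?hA - ka) + (?hB - kb)) + 7 * (?n - (jx c1 ka + jx c2 kb)) + 2"
  note M0 = less.prems
  note M = less.prems[unfolded Minv_def]
  have ms: "MS c1 c2 s" using M by blast
  have r: "ireg s 0 = 0" "ireg s 1 = 1" "ireg s 2 = 4" "ireg s 11 = int ?hA" "ireg s 21 = int ?hB"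
    using ms by (simp_all add: MS_def)
  have R: "pc s = 21" "ka \<le> ?hA" "kb \<le> ?hB" "ireg s 13 = int ka" "ireg s 14 = int kb"
    "ireg s 15 = -4 - 4 * int ka" "ireg s 16 = -6 - 4 * int kb" "ireg s 17 = int (jx c1 ka)"
    "ireg s 18 = int (jx c2 kb)" "ireg s 19 = 2 + 2 * int (jx c1 ka + jx c2 kb)"
    using M by simp_all
  have mr: "mrg (pl c1 c2) (weight c1 c2) (drop ka (BA c1)) (drop kb (BB c2)) = drop (jx c1 ka + jx c2 kb) (MM c1 c2)"
    using M by simp
  have ok: "outok (MM c1 c2) (jx c1 ka + jx c2 kb) (imem s)" using M by simp
  have jle: "jx c1 (Suc ka) \<le> length c1" "jx c2 (Suc kb) \<le> length c2"
    using jx_le[OF pos1] jx_le[OF pos2] by auto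
  have jm: "jx c1 ka \<le> jx c1 (Suc ka)" "jx c2 kb \<le> jx c2 (Suc kb)" by (rule jx_mono)+
  consider (E) "ka = ?hA" "kb = ?hB" | (AX) "ka = ?hA" "kb < ?hB" | (BX) "ka < ?hA" "kb = ?hB"
    | (C) "ka < ?hA" "kb < ?hB"
    using R(2,3) by linarith
  then show ?case
  proof cases
    case E
    have c1: "ireg s 11 \<le> ireg s 13" "ireg s 21 \<le> ireg s 14" using r R E by simp_all
    have s1: "run prog 2 s = s\<lparr>pc := 59\<rparr>" using seg_mend[OF R(1) c1] .
    have "jx c1 ka = length c1" "jx c2 kb = length c2" using jx_all[OF pos1] jx_all[OF pos2] E by auto
    then have "outok (MM c1 c2) ?n (imem (s\<lparr>pc := 59\<rparr>))" using ok by simp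
    moreover have "reach s (s\<lparr>pc := 59\<rparr>) (?B ka kb)" using reach_mono[OF reach_run[of s 2]] s1 by simp
    ultimately show ?thesis by auto
  next
    case AX
    have c1: "ireg s 11 \<le> ireg s 13" "\<not> ireg s 21 \<le> ireg s 14" using r R AX by simp_all
    define s1 where "s1 = run prog 5 s"
    note sg = seg_mAex[OF R(1) c1 r(2), folded s1_def]
    have e: "imem s (ireg s 16 - 1) = int (jx c2 (Suc kb))" using MS_B[OF ms AX(2)] R by simp
    have dBA: "drop ka (BA c1) = []" using AX by (simp add: len_BA)
    have dBB: "drop kb (BB c2) = BB c2 ! kb # drop (Suc kb) (BB c2)" using AX by (simp add: len_BA Cons_nth_drop_Suc)
    have "Binv c1 c2 ka kb (jx c2 kb) s1"
      unfolding Binv_def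
    proof (intro conjI)
      show "MS c1 c2 s1" using MS_same[OF ms] sg by simp
      show "drop (jx c1 ka + jx c2 kb) (MM c1 c2) = BB c2 ! kb @ mrg (pl c1 c2) (weight c1 c2) (drop ka (BA c1)) (drop (Suc kb) (BB c2))"
        using mr[symmetric] dBA dBB by simp
    qed (use sg R AX e ok jm in simp_all)
    from bl_loop[OF pos2 this] obtain s2 where
      s2: "reach s1 s2 (7 * (jx c2 (Suc kb) - jx c2 kb) + 4)" "Minv c1 c2 ka (Suc kb) s2" by blast
    have lt: "(?hA - ka) + (?hB - Suc kb) < (?hA - ka) + (?hB - kb)" using AX by simp
    from less.hyps[OF lt s2(2)] obtain s3 where
      s3: "reach s2 s3 (?B ka (Suc kb))" "pc s3 = 59" "outok (MM c1 c2) ?n (imem s3)" by blast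
    have "reach s s3 (5 + (7 * (jx c2 (Suc kb) - jx c2 kb) + 4) + ?B ka (Suc kb))"
      using reach_trans[OF reach_trans[OF reach_run[of s 5, folded s1_def] s2(1)] s3(1)] .
    moreover have "5 + (7 * (jx c2 (Suc kb) - jx c2 kb) + 4) + ?B ka (Suc kb) \<le> ?B ka kb"
      using AX jle jm jx_le[OF pos1, of ka] by simp
    ultimately show ?thesis using s3 reach_mono by blast
  next
    case BX
    have c1: "\<not> ireg s 11 \<le> ireg s 13" "ireg s 21 \<le> ireg s 14" using r R BX by simp_all
    define s1 where "s1 = run prog 4 s"
    note sg = seg_mBex[OF R(1) c1 r(2), folded s1_def]
    have e: "imem s (ireg s 15 - 1) = int (jx c1 (Suc ka))" using MS_A[OF ms BX(1)] R by simp
    have dBB: "drop kb (BB c2) = []" using BX by (simp add: len_BA)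
    have dBA: "drop ka (BA c1) = BA c1 ! ka # drop (Suc ka) (BA c1)" using BX by (simp add: len_BA Cons_nth_drop_Suc)
    have "Ainv c1 c2 ka kb (jx c1 ka) s1"
      unfolding Ainv_def
    proof (intro conjI)
      show "MS c1 c2 s1" using MS_same[OF ms] sg by simp
      show "drop (jx c1 ka + jx c2 kb) (MM c1 c2) = BA c1 ! ka @ mrg (pl c1 c2) (weight c1 c2) (drop (Suc ka) (BA c1)) (drop kb (BB c2))"
        using mr[symmetric] dBA dBB by (simp add: mrg_Nil2)
    qed (use sg R BX e ok jm in simp_all)
    from al_loop[OF pos1 this] obtain s2 where
      s2: "reach s1 s2 (7 * (jx c1 (Suc ka) - jx c1 ka) + 4)" "Minv c1 c2 (Suc ka) kb s2" by blast
    have lt: "(?hA - Suc ka) + (?hB - kb) < (?hA - ka) + (?hB - kb)" using BX by simp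
    from less.hyps[OF lt s2(2)] obtain s3 where
      s3: "reach s2 s3 (?B (Suc ka) kb)" "pc s3 = 59" "outok (MM c1 c2) ?n (imem s3)" by blast
    have "reach s s3 (4 + (7 * (jx c1 (Suc ka) - jx c1 ka) + 4) + ?B (Suc ka) kb)"
      using reach_trans[OF reach_trans[OF reach_run[of s 4, folded s1_def] s2(1)] s3(1)] .
    moreover have "4 + (7 * (jx c1 (Suc ka) - jx c1 ka) + 4) + ?B (Suc ka) kb \<le> ?B ka kb"
      using BX jle jm jx_le[OF pos2, of kb] by simp
    ultimately show ?thesis using s3 reach_mono by blast
  next
    case C
    have c1: "\<not> ireg s 11 \<le> ireg s 13" "\<not> ireg s 21 \<le> ireg s 14" using r R C by simp_all
    have mA: "imem s (ireg s 15 - 1) = int (jx c1 (Suc ka))" "rmem s (ireg s 15) = Ps (pl c1 c2) (BA c1 ! ka)"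
      "rmem s (ireg s 15 - 1) = Ps (weight c1 c2) (BA c1 ! ka)"
      using MS_A[OF ms C(1)] R Ps_BA[OF C(1)] by simp_all
    have mB: "imem s (ireg s 16 - 1) = int (jx c2 (Suc kb))" "rmem s (ireg s 16) = Ps (pl c1 c2) (BB c2 ! kb)"
      "rmem s (ireg s 16 - 1) = Ps (weight c1 c2) (BB c2 ! kb)"
      using MS_B[OF ms C(2)] R Ps_BB[OF C(2)] by simp_all
    have dBA: "drop ka (BA c1) = BA c1 ! ka # drop (Suc ka) (BA c1)" using C by (simp add: len_BA Cons_nth_drop_Suc)
    have dBB: "drop kb (BB c2) = BB c2 ! kb # drop (Suc kb) (BB c2)" using C by (simp add: len_BA Cons_nth_drop_Suc)
    show ?thesis
    proof (cases "Ps (weight c1 c2) (BB c2 ! kb) * Ps (pl c1 c2) (BA c1 ! ka) \<le> Ps (weight c1 c2) (BA c1 ! ka) * Ps (pl c1 c2) (BB c2 ! kb)")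
      case True
      have cnd: "rmem s (ireg s 16 - 1) * rmem s (ireg s 15) \<le> rmem s (ireg s 15 - 1) * rmem s (ireg s 16)"
        using True mA mB by simp
      define s1 where "s1 = run prog 13 s"
      note sg = seg_mcmpA[OF R(1) c1 r(2) cnd, folded s1_def]
      have "Ainv c1 c2 ka kb (jx c1 ka) s1"
        unfolding Ainv_def
      proof (intro conjI)
        show "MS c1 c2 s1" using MS_same[OF ms] sg by simp
        show "drop (jx c1 ka + jx c2 kb) (MM c1 c2) = BA c1 ! ka @ mrg (pl c1 c2) (weight c1 c2) (drop (Suc ka) (BA c1)) (drop kb (BB c2))"
          using mr[symmetric] dBA dBB True by simp
      qed (use sg R C mA ok jm in simp_all)
      from al_loop[OF pos1 this] obtain s2 where
        s2: "reach s1 s2 (7 * (jx c1 (Suc ka) - jx c1 ka) + 4)" "Minv c1 c2 (Suc ka) kb s2" by blast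
      have lt: "(?hA - Suc ka) + (?hB - kb) < (?hA - ka) + (?hB - kb)" using C by simp
      from less.hyps[OF lt s2(2)] obtain s3 where
        s3: "reach s2 s3 (?B (Suc ka) kb)" "pc s3 = 59" "outok (MM c1 c2) ?n (imem s3)" by blast
      have "reach s s3 (13 + (7 * (jx c1 (Suc ka) - jx c1 ka) + 4) + ?B (Suc ka) kb)"
        using reach_trans[OF reach_trans[OF reach_run[of s 13, folded s1_def] s2(1)] s3(1)] .
      moreover have "13 + (7 * (jx c1 (Suc ka) - jx c1 ka) + 4) + ?B (Suc ka) kb \<le> ?B ka kb"
        using C jle jm jx_le[OF pos2, of kb] by simp
      ultimately show ?thesis using s3 reach_mono by blast
    next
      case False
      have cnd: "\<not> rmem s (ireg s 16 - 1) * rmem s (ireg s 15) \<le> rmem s (ireg s 15 - 1) * rmem s (ireg s 16)"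
        using False mA mB by simp
      define s1 where "s1 = run prog 14 s"
      note sg = seg_mcmpB[OF R(1) c1 r(2) cnd, folded s1_def]
      have "Binv c1 c2 ka kb (jx c2 kb) s1"
        unfolding Binv_def
      proof (intro conjI)
        show "MS c1 c2 s1" using MS_same[OF ms] sg by simp
        show "drop (jx c1 ka + jx c2 kb) (MM c1 c2) = BB c2 ! kb @ mrg (pl c1 c2) (weight c1 c2) (drop ka (BA c1)) (drop (Suc kb) (BB c2))"
          using mr[symmetric] dBA dBB False by simp
      qed (use sg R C mB ok jm in simp_all)
      from bl_loop[OF pos2 this] obtain s2 where
        s2: "reach s1 s2 (7 * (jx c2 (Suc kb) - jx c2 kb) + 4)" "Minv c1 c2 ka (Suc kb) s2" by blast
      have lt: "(?hA - ka) + (?hB - Suc kb) < (?hA - ka) + (?hB - kb)" using C by simp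
      from less.hyps[OF lt s2(2)] obtain s3 where
        s3: "reach s2 s3 (?B ka (Suc kb))" "pc s3 = 59" "outok (MM c1 c2) ?n (imem s3)" by blast
      have "reach s s3 (14 + (7 * (jx c2 (Suc kb) - jx c2 kb) + 4) + ?B ka (Suc kb))"
        using reach_trans[OF reach_trans[OF reach_run[of s 14, folded s1_def] s2(1)] s3(1)] .
      moreover have "14 + (7 * (jx c2 (Suc kb) - jx c2 kb) + 4) + ?B ka (Suc kb) \<le> ?B ka kb"
        using C jle jm jx_le[OF pos1, of ka] by simp
      ultimately show ?thesis using s3 reach_mono by blast
    qed
  qed
qed


lemma init_rmem:
  assumes "j < length (c1 @ c2)"
  shows "rmem (init_state c1 c2) (2 * int j) = fst ((c1 @ c2) ! j)"
    "rmem (init_state c1 c2) (2 * int j + 1) = snd ((c1 @ c2) ! j)"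
proof -
  have n1: "nat (2 * int j) = 2 * j" "nat (2 * int j + 1) = 2 * j + 1" by simp_all
  show "rmem (init_state c1 c2) (2 * int j) = fst ((c1 @ c2) ! j)"
    using assms unfolding init_state_def by (simp only: state.simps n1) simp
  show "rmem (init_state c1 c2) (2 * int j + 1) = snd ((c1 @ c2) ! j)"
    using assms unfolding init_state_def by (simp only: state.simps n1) simp
qed

lemma valid_labels:
  assumes "\<tau> \<in> feasible_seqs c1 c2" "x \<in> set \<tau>"
  shows "ptime c1 c2 x = pl c1 c2 x"
proof -
  have "set \<tau> = Inl ` {0..<length c1} \<union> Inr ` {0..<length c2}"
    using set_shuffles[OF assms(1)[unfolded feasible_seqs_def]] by simp
  then show ?thesis using assms(2) by (auto simp: pl_def pfc_def)
qed

lemma twct_cost: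
  assumes "\<tau> \<in> feasible_seqs c1 c2"
  shows "twct c1 c2 \<tau> = cost (pl c1 c2) (weight c1 c2) \<tau>"
proof -
  have "twct c1 c2 \<tau> = (\<Sum>k<length \<tau>. weight c1 c2 (\<tau> ! k) * (\<Sum>l\<le>k. pl c1 c2 (\<tau> ! l)))"
    unfolding twct_def completion_def
  proof (intro sum.cong refl arg_cong2[where f = "(*)"])
    fix k l assume "k \<in> {..<length \<tau>}" "l \<in> {..k}"
    then have "\<tau> ! l \<in> set \<tau>" by simp
    then show "ptime c1 c2 (\<tau> ! l) = pl c1 c2 (\<tau> ! l)" using valid_labels[OF assms] by blast
  qed
  then show ?thesis using cost_sum by metis
qed

lemma pl_pos: "valid_instance c1 c2 \<Longrightarrow> \<forall>x. pl c1 c2 x > 0"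
  using pfc_pos by (auto simp: pl_def split: sum.split)

lemma concat_BA: "\<forall>j. pfc c1 j > 0 \<Longrightarrow> concat (BA c1) = map Inl [0..<length c1]"
  unfolding BA_def using BLc_concat by (metis map_concat)
lemma concat_BB: "\<forall>j. pfc c2 j > 0 \<Longrightarrow> concat (BB c2) = map Inr [0..<length c2]"
  unfolding BB_def using BLc_concat by (metis map_concat)

lemma MM_feasible: "valid_instance c1 c2 \<Longrightarrow> MM c1 c2 \<in> feasible_seqs c1 c2"
  unfolding MM_def feasible_seqs_def
  using mrg_shuffles concat_BA concat_BB pfc_pos by metis

lemma comp_lab: "pl c1 c2 \<circ> Inl = pfc c1" "weight c1 c2 \<circ> Inl = wtc c1"
  "pl c1 c2 \<circ> Inr = pfc c2" "weight c1 c2 \<circ> Inr = wtc c2"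
  by (rule ext, simp add: pl_def wtc_def)+

lemma MM_opt: assumes "valid_instance c1 c2" shows "optimal_seq c1 c2 (MM c1 c2)"
  unfolding optimal_seq_def
proof (intro conjI ballI)
  show "MM c1 c2 \<in> feasible_seqs c1 c2" using MM_feasible[OF assms] .
  fix \<tau> assume t: "\<tau> \<in> feasible_seqs c1 c2"
  have p1: "\<forall>j. pfc c1 j > 0" "\<forall>j. pfc c2 j > 0" using pfc_pos[OF assms] by auto
  have g1: "good (pl c1 c2) (weight c1 c2) (BA c1)"
    unfolding BA_def using good_map[of "pl c1 c2" Inl "weight c1 c2"] BLc_good[OF p1(1)]
    by (simp add: comp_lab)
  have g2: "good (pl c1 c2) (weight c1 c2) (BB c2)"
    unfolding BB_def using good_map[of "pl c1 c2" Inr "weight c1 c2"] BLc_good[OF p1(2)]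
    by (simp add: comp_lab)
  have "\<tau> \<in> shuffles (concat (BA c1)) (concat (BB c2))"
    using t concat_BA[OF p1(1)] concat_BB[OF p1(2)] by (simp add: feasible_seqs_def)
  from mrg_opt[OF pl_pos[OF assms] g1 g2 this]
  have "cost (pl c1 c2) (weight c1 c2) (MM c1 c2) \<le> cost (pl c1 c2) (weight c1 c2) \<tau>"
    unfolding MM_def .
  then show "twct c1 c2 (MM c1 c2) \<le> twct c1 c2 \<tau>"
    using twct_cost[OF t] twct_cost[OF MM_feasible[OF assms]] by simp
qed

lemma length_MM: "valid_instance c1 c2 \<Longrightarrow> length (MM c1 c2) = length c1 + length c2"
  using MM_feasible length_shuffles unfolding feasible_seqs_def by fastforce

lemma output_MM:
  assumes "outok M (length M) (imem s)"
  shows "output_seq (length M) s = M"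
proof (rule nth_equalityI)
  show "length (output_seq (length M) s) = length M" by (simp add: output_seq_def)
  fix k assume "k < length (output_seq (length M) s)"
  then have k: "k < length M" by (simp add: output_seq_def)
  have o: "imem s (2 + 2 * int k) = tag (M ! k)" "imem s (3 + 2 * int k) = int (idx (M ! k))"
    using assms k unfolding outok_def by auto
  show "output_seq (length M) s ! k = M ! k"
    using k o by (cases "M ! k") (simp_all add: output_seq_def)
qed


lemma main_run:
  assumes valid: "valid_instance c1 c2"
  shows "\<exists>s'. reach (init_state c1 c2) s' (100 * (length c1 + length c2) + 100) \<and> pc s' = 59
           \<and> outok (MM c1 c2) (length c1 + length c2) (imem s')"
proof -
  define a where "a = length c1"
  define b where "b = length c2"
  define s0 where "s0 = init_state c1 c2"
  have p1: "\<forall>j. pfc c1 j > 0" "\<forall>j. pfc c2 j > 0" using pfc_pos[OF valid] by auto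
  have s0: "pc s0 = 0" "ireg s0 0 = 0" "imem s0 0 = int a" "imem s0 1 = int b"
    unfolding s0_def init_state_def a_def b_def by simp_all
  define s1 where "s1 = run prog 7 s0"
  note si = seg_init[OF s0(1,2), folded s1_def]
  have ctx1: "Dctx s1 a 0 (-4) (pfc c1) (wtc c1)"
    unfolding Dctx_def
  proof (intro conjI allI impI)
    fix j assume j: "j < a"
    then have j': "j < length (c1 @ c2)" unfolding a_def by simp
    show "rmem s1 (2 * (0 + int j)) = pfc c1 j" "rmem s1 (2 * (0 + int j) + 1) = wtc c1 j"
      using init_rmem[OF j'] si j unfolding s0_def a_def pfc_def wtc_def by (simp_all add: nth_append)
  qed (use si s0 in simp_all)
  from D_run[OF ctx1 si(1)] obtain s2 where
    s2: "reach s1 s2 (44 * a + 4)" "pc s2 = 96" "Dcommon s1 (-4) (pfc c1) (wtc c1) (decomp (pfc c1) (wtc c1) a) s2"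
    by blast
  let ?stA = "decomp (pfc c1) (wtc c1) a"
  have fr2: "\<forall>r. r \<notin> scratch \<longrightarrow> ireg s2 r = ireg s1 r" using s2(3) by (simp add: Dcommon_def)
  have mf2: "\<forall>x. \<not> inreg (-4) x \<longrightarrow> imem s2 x = imem s1 x \<and> rmem s2 x = rmem s1 x"
    using s2(3) by (simp add: Dcommon_def)
  have h2: "ireg s2 7 = int (length ?stA)" "ireg s2 6 = -4 + 4 - 4 * int (length ?stA)"
    using s2(3) by (simp_all add: Dcommon_def)
  have stk2: "stk_top (ireg s2 6) (pfc c1) (wtc c1) ?stA (imem s2) (rmem s2)"
    using s2(3) unfolding Dcommon_def by blast
  have bot2: "stk_bot (-4) (pfc c1) (wtc c1) (BLc c1) (imem s2) (rmem s2)"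
    using stk_top_bot[of "-4" ?stA] stk2 h2 unfolding BLc_def a_def by simp
  have r2: "ireg s2 0 = 0" "ireg s2 1 = 1" "ireg s2 2 = 4" "ireg s2 4 = int a" "ireg s2 8 = 0"
    using fr2 si s0 by (simp_all add: scratch_def)
  define s3 where "s3 = s2\<lparr>pc := 7\<rparr>"
  have s23: "run prog 1 s2 = s3" using seg_ret1[OF s2(2) r2(5) r2(1)] s3_def by simp
  define s4 where "s4 = run prog 6 s3"
  have s3p: "pc s3 = 7" "ireg s3 0 = 0" "ireg s3 1 = 1" using r2 s3_def by simp_all
  note sm = seg_mid[OF s3p, folded s4_def]
  have nr1: "\<not> inreg (-4) 1" by (simp add: inreg_def)
  have i41: "imem s3 1 = int b" using mf2 nr1 si s0 s3_def by simp
  have ctx2: "Dctx s4 b (int a) (-6) (pfc c2) (wtc c2)"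
    unfolding Dctx_def
  proof (intro conjI allI impI)
    fix j assume j: "j < b"
    then have j': "a + j < length (c1 @ c2)" unfolding a_def b_def by simp
    have nr: "\<not> inreg (-4) (2 * (int a + int j))" "\<not> inreg (-4) (2 * (int a + int j) + 1)"
      by (simp_all add: inreg_def)
    have e: "2 * (int a + int j) = 2 * int (a + j)" by simp
    show "rmem s4 (2 * (int a + int j)) = pfc c2 j" "rmem s4 (2 * (int a + int j) + 1) = wtc c2 j"
      using init_rmem[OF j'] sm mf2 nr si j unfolding s3_def s0_def a_def b_def pfc_def wtc_def e
      by (simp_all add: nth_append)
  qed (use sm s3_def r2 i41 in simp_all)
  from D_run[OF ctx2 sm(1)] obtain s5 where
    s5: "reach s4 s5 (44 * b + 4)" "pc s5 = 96" "Dcommon s4 (-6) (pfc c2) (wtc c2) (decomp (pfc c2) (wtc c2) b) s5"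
    by blast
  let ?stB = "decomp (pfc c2) (wtc c2) b"
  have fr5: "\<forall>r. r \<notin> scratch \<longrightarrow> ireg s5 r = ireg s4 r" using s5(3) by (simp add: Dcommon_def)
  have mf5: "\<forall>x. \<not> inreg (-6) x \<longrightarrow> imem s5 x = imem s4 x \<and> rmem s5 x = rmem s4 x"
    using s5(3) by (simp add: Dcommon_def)
  have h5: "ireg s5 7 = int (length ?stB)" "ireg s5 6 = -6 + 4 - 4 * int (length ?stB)"
    using s5(3) by (simp_all add: Dcommon_def)
  have stk5: "stk_top (ireg s5 6) (pfc c2) (wtc c2) ?stB (imem s5) (rmem s5)"
    using s5(3) unfolding Dcommon_def by blast
  have bot5: "stk_bot (-6) (pfc c2) (wtc c2) (BLc c2) (imem s5) (rmem s5)"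
    using stk_top_bot[of "-6" ?stB] stk5 h5 unfolding BLc_def b_def by simp
  have r4: "\<forall>r. r \<notin> {11, 5, 4, 12, 8} \<longrightarrow> ireg s4 r = ireg s2 r" using sm s3_def by simp
  have r5: "ireg s5 0 = 0" "ireg s5 1 = 1" "ireg s5 2 = 4" "ireg s5 8 = 1"
    "ireg s5 11 = int (length ?stA)"
    using fr5 r4 r2 sm h2 s3_def by (simp_all add: scratch_def)
  have botA5: "stk_bot (-4) (pfc c1) (wtc c1) (BLc c1) (imem s5) (rmem s5)"
  proof (rule stk_bot_frame[OF bot2], intro allI conjI)
    fix k
    show "imem s5 (- 4 - 4 * int k - 1) = imem s2 (- 4 - 4 * int k - 1)"
      using mf5 not_inreg6(2)[of k] sm s3_def by simp
    show "rmem s5 (- 4 - 4 * int k) = rmem s2 (- 4 - 4 * int k)"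
      using mf5 not_inreg6(1)[of k] sm s3_def by simp
    show "rmem s5 (- 4 - 4 * int k - 1) = rmem s2 (- 4 - 4 * int k - 1)"
      using mf5 not_inreg6(2)[of k] sm s3_def by simp
  qed
  define s6 where "s6 = s5\<lparr>pc := 13\<rparr>"
  have s56: "run prog 2 s5 = s6" using seg_ret2[OF s5(2) r5(4) r5(1)] s6_def by simp
  define s7 where "s7 = run prog 8 s6"
  have s6p: "pc s6 = 13" "ireg s6 0 = 0" using s6_def r5 by simp_all
  note mi = seg_minit[OF s6p, folded s7_def]
  have M7: "Minv c1 c2 0 0 s7"
    unfolding Minv_def MS_def
  proof (intro conjI)
    show "stk_bot (-4) (pfc c1) (wtc c1) (BLc c1) (imem s7) (rmem s7)" using botA5 mi s6_def by simp
    show "stk_bot (-6) (pfc c2) (wtc c2) (BLc c2) (imem s7) (rmem s7)" using bot5 mi s6_def by simp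
    show "ireg s7 11 = int (length (BLc c1))" using mi r5 s6_def by (simp add: BLc_def a_def)
    show "ireg s7 21 = int (length (BLc c2))" using mi h5 s6_def by (simp add: BLc_def b_def)
    show "mrg (pl c1 c2) (weight c1 c2) (drop 0 (BA c1)) (drop 0 (BB c2)) = drop (jx c1 0 + jx c2 0) (MM c1 c2)"
      by (simp add: MM_def jx_def)
    show "outok (MM c1 c2) (jx c1 0 + jx c2 0) (imem s7)" by (simp add: outok_def jx_def)
  qed (use mi r5 s6_def in \<open>simp_all add: jx_def\<close>)
  from ml_loop[OF p1 M7] obtain s8 where
    s8: "reach s7 s8 (18 * (length (BLc c1) + length (BLc c2)) + 7 * (length c1 + length c2) + 2)"
        "pc s8 = 59" "outok (MM c1 c2) (length c1 + length c2) (imem s8)"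
    by (auto simp: jx_def)
  have hl: "length (BLc c1) \<le> a" "length (BLc c2) \<le> b"
    using length_decomp_le unfolding BLc_def a_def b_def by (simp_all add: length_decomp_le)
  have "reach s0 s8 (7 + (44 * a + 4) + 1 + 6 + (44 * b + 4) + 2 + 8
       + (18 * (length (BLc c1) + length (BLc c2)) + 7 * (length c1 + length c2) + 2))"
  proof -
    have t1: "reach s0 s1 7" using reach_run[of s0 7] s1_def by simp
    have t3: "reach s2 s3 1" using reach_run[of s2 1] s23 by simp
    have t4: "reach s3 s4 6" using reach_run[of s3 6] s4_def by simp
    have t6: "reach s5 s6 2" using reach_run[of s5 2] s56 by simp
    have t7: "reach s6 s7 8" using reach_run[of s6 8] s7_def by simp
    show ?thesis
      using reach_trans[OF reach_trans[OF reach_trans[OF reach_trans[OF reach_trans[OF reach_trans[OF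
            reach_trans[OF t1 s2(1)] t3] t4] s5(1)] t6] t7] s8(1)] .
  qed
  moreover have "7 + (44 * a + 4) + 1 + 6 + (44 * b + 4) + 2 + 8
       + (18 * (length (BLc c1) + length (BLc c2)) + 7 * (length c1 + length c2) + 2)
       \<le> 100 * (length c1 + length c2) + 100"
    using hl unfolding a_def b_def by simp
  ultimately have "reach s0 s8 (100 * (length c1 + length c2) + 100)" using reach_mono by blast
  then show ?thesis using s8 s0_def by blast
qed

theorem lemma2:
  shows "\<exists>P :: instr list. solves_in_linear_time P"
proof (intro exI)
  show "solves_in_linear_time prog"
    unfolding solves_in_linear_time_def
  proof (intro exI[of _ 100] allI impI)
    fix c1 c2 assume v: "valid_instance c1 c2"
    from main_run[OF v] obtain s' where
      s': "reach (init_state c1 c2) s' (100 * (length c1 + length c2) + 100)" "pc s' = 59"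
          "outok (MM c1 c2) (length c1 + length c2) (imem s')" by blast
    from s'(1) obtain t where t: "t \<le> 100 * (length c1 + length c2) + 100" "run prog t (init_state c1 c2) = s'"
      unfolding reach_def by blast
    have h: "halted prog s'" using s'(2) by (simp add: halted_def)
    have o: "output_seq (length c1 + length c2) s' = MM c1 c2"
      using output_MM[of "MM c1 c2" s'] s'(3) length_MM[OF v] by simp
    show "let n = length c1 + length c2 in \<exists>t\<le>100 * n + 100. halted prog (run prog t (init_state c1 c2)) \<and>
        optimal_seq c1 c2 (output_seq n (run prog t (init_state c1 c2)))"
      unfolding Let_def using t h o MM_opt[OF v] by metis
  qed
qed

end
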